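(* Let $k\ge l\ge0$, $H\in\mathcal{H}_{k,l}(\mathbb{R}^{2m},\mathbb{C})$, and integers $i\ge0$, $0\le j\le k-l$. Then $$C\big(C^iS_u^jH\big)=C^{i+1}S_u^jH,\qquad S_u\big(C^iS_u^jH\big)=\frac{H_x+i+1}{H_x+1}\,C^iS_u^{j+1}H.$$
   Context: Fix an integer $m>4$. For $x,u\in\mathbb{R}^m$ let $\mathcal{P}_{p,q}(\mathbb{R}^{2m},\mathbb{C})$ be complex polynomials of degree $p$ in $x$ and $q$ in $u$. Write $|x|^2=\sum x_j^2$, $\langle u,x\rangle=\sum u_jx_j$, $\Delta_x=\sum\partial_{x_j}^2$, $\Delta_u=\sum\partial_{u_j}^2$, $\langle\partial_u,\partial_x\rangle=\sum\partial_{u_j}\partial_{x_j}$, $\langle x,\partial_u\rangle=\sum x_j\partial_{u_j}$, $\langle u,\partial_x\rangle=\sum u_j\partial_{x_j}$, $\mathbb{E}_x=\sum x_j\partial_{x_j}$, $H_x=-(\mathbb{E}_x+\frac m2)$, $\ker(D_1,\dots,D_r)=\bigcap\ker D_i$. Every $P\in\mathcal{P}_{p,q}$ is uniquely $\sum_{a,b\ge0}|x|^{2a}|u|^{2b}H'_{p-2a,q-2b}$ with $H'_{p-2a,q-2b}\in\mathcal{P}_{p-2a,q-2b}\cap\ker(\Delta_x,\Delta_u)$; $\pi_{\mathfrak{s}}P:=H'_{p,q}$. On $\ker(\Delta_x,\Delta_u)$: $S_u=\pi_{\mathfrak{s}}\langle u,\partial_x\rangle$, $C=\pi_{\mathfrak{s}}\langle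 u,x\rangle$. For $k\ge l\ge0$, $\mathcal{H}_{k,l}=\mathcal{P}_{k,l}\cap\ker(\Delta_x,\Delta_u,\langle\partial_u,\partial_x\rangle,\langle x,\partial_u\rangle)$. Convention: the rational function of $H_x$ written to the left is evaluated at the eigenvalue of $H_x$ on the bihomogeneous polynomial $C^iS_u^{j+1}H$. *)

theory Defs
  imports Complex_Main "HOL-Library.Poly_Mapping"
begin

text \<open>Polynomials in the 2m real variables x_0..x_{m-1}, u_0..u_{m-1} with complex
coefficients, represented as finitely supported maps from monomials (exponent vectors)
to coefficients. Variable index j < m stands for x_j, index m+j stands for u_j.\<close>

type_synonym cpoly = "(nat \<Rightarrow>\<^sub>0 nat) \<Rightarrow>\<^sub>0 complex"

definition pvar :: "nat \<Rightarrow> cpoly" where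
  "pvar v = Poly_Mapping.single (Poly_Mapping.single v 1) 1"

definition pscale :: "complex \<Rightarrow> cpoly \<Rightarrow> cpoly" where
  "pscale c P = Poly_Mapping.map (\<lambda>a. c * a) P"

definition pd :: "nat \<Rightarrow> cpoly \<Rightarrow> cpoly" where
  "pd v P = (\<Sum>\<alpha>\<in>Poly_Mapping.keys P. Poly_Mapping.single (\<alpha> - Poly_Mapping.single v 1)
                   (of_nat (Poly_Mapping.lookup \<alpha> v) * Poly_Mapping.lookup P \<alpha>))"

definition xvar :: "nat \<Rightarrow> cpoly" where "xvar j = pvar j"
definition uvar :: "nat \<Rightarrow> nat \<Rightarrow> cpoly" where "uvar m j = pvar (m + j)"
definition dx :: "nat \<Rightarrow> cpoly \<Rightarrow> cpoly" where "dx j = pd j"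
definition du :: "nat \<Rightarrow> nat \<Rightarrow> cpoly \<Rightarrow> cpoly" where "du m j = pd (m + j)"

definition lap_x :: "nat \<Rightarrow> cpoly \<Rightarrow> cpoly" where
  "lap_x m P = (\<Sum>j<m. dx j (dx j P))"
definition lap_u :: "nat \<Rightarrow> cpoly \<Rightarrow> cpoly" where
  "lap_u m P = (\<Sum>j<m. du m j (du m j P))"
definition du_dx :: "nat \<Rightarrow> cpoly \<Rightarrow> cpoly" where
  "du_dx m P = (\<Sum>j<m. du m j (dx j P))"
definition x_du :: "nat \<Rightarrow> cpoly \<Rightarrow> cpoly" where
  "x_du m P = (\<Sum>j<m. xvar j * du m j P)"
definition u_dx :: "nat \<Rightarrow> cpoly \<Rightarrow> cpoly" where
  "u_dx m P = (\<Sum>j<m. uvar m j * dx j P)"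

definition normx2 :: "nat \<Rightarrow> cpoly" where "normx2 m = (\<Sum>j<m. xvar j * xvar j)"
definition normu2 :: "nat \<Rightarrow> cpoly" where "normu2 m = (\<Sum>j<m. uvar m j * uvar m j)"
definition ux :: "nat \<Rightarrow> cpoly" where "ux m = (\<Sum>j<m. uvar m j * xvar j)"

definition bihom :: "nat \<Rightarrow> nat \<Rightarrow> nat \<Rightarrow> cpoly \<Rightarrow> bool" where
  "bihom m p q P \<longleftrightarrow> (\<forall>\<alpha>\<in>Poly_Mapping.keys P. Poly_Mapping.keys \<alpha> \<subseteq> {..<2*m}
        \<and> (\<Sum>j<m. Poly_Mapping.lookup \<alpha> j) = p \<and> (\<Sum>j<m. Poly_Mapping.lookup \<alpha> (m + j)) = q)"

definition harm :: "nat \<Rightarrow> cpoly \<Rightarrow> bool" where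
  "harm m P \<longleftrightarrow> lap_x m P = 0 \<and> lap_u m P = 0"

definition pi_s :: "nat \<Rightarrow> cpoly \<Rightarrow> cpoly" where
  "pi_s m P = (THE h. \<exists>p q G. bihom m p q P
      \<and> (\<forall>a\<le>p div 2. \<forall>b\<le>q div 2. bihom m (p - 2*a) (q - 2*b) (G a b) \<and> harm m (G a b))
      \<and> P = (\<Sum>a\<le>p div 2. \<Sum>b\<le>q div 2. normx2 m ^ a * normu2 m ^ b * G a b)
      \<and> h = G 0 0)"

definition S_u :: "nat \<Rightarrow> cpoly \<Rightarrow> cpoly" where "S_u m P = pi_s m (u_dx m P)"
definition C_op :: "nat \<Rightarrow> cpoly \<Rightarrow> cpoly" where "C_op m P = pi_s m (ux m * P)"

definition Hkl :: "nat \<Rightarrow> nat \<Rightarrow> nat \<Rightarrow> cpoly set" where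
  "Hkl m k l = {P. bihom m k l P \<and> lap_x m P = 0 \<and> lap_u m P = 0
                  \<and> du_dx m P = 0 \<and> x_du m P = 0}"

text \<open>Eigenvalue of H_x = -(E_x + m/2) on polynomials of x-degree d.\<close>
definition hx_eig :: "nat \<Rightarrow> int \<Rightarrow> complex" where
  "hx_eig m d = - (of_int d + of_nat m / 2)"

end

theory Submission
  imports Defs
begin


abbreviation lk where "lk \<equiv> Poly_Mapping.lookup"
abbreviation ks where "ks \<equiv> Poly_Mapping.keys"
abbreviation e :: "nat \<Rightarrow> (nat \<Rightarrow>\<^sub>0 nat)" where "e v \<equiv> Poly_Mapping.single v 1"
abbreviation K :: "complex \<Rightarrow> cpoly" where "K c \<equiv> Poly_Mapping.single 0 c"

lemma lookup_e: "lk (e v) w = (if v = w then 1 else 0)"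
  unfolding lookup_single by (simp add: when_def)
lemma lookup_e'[simp]: "lk (Poly_Mapping.single v (Suc 0)) w = (if v = w then 1 else 0)"
  unfolding lookup_single by (simp add: when_def)

lemma eq_add_e_iff: "(\<beta> = e w + q) \<longleftrightarrow> (lk \<beta> w \<ge> 1 \<and> q = \<beta> - e w)"
proof
  assume "\<beta> = e w + q" then show "lk \<beta> w \<ge> 1 \<and> q = \<beta> - e w"
    by (auto simp: poly_mapping_eq_iff fun_eq_iff lookup_add lookup_minus)
next
  assume "lk \<beta> w \<ge> 1 \<and> q = \<beta> - e w" then show "\<beta> = e w + q"
    by (auto simp: poly_mapping_eq_iff fun_eq_iff lookup_add lookup_minus)
qed

lemma lookup_single_mult: "lk (Poly_Mapping.single k a * G) \<beta> = a * Sum_any (\<lambda>q. lk G q when \<beta> = k + q)"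
  unfolding lookup_mult lookup_single when_mult
  by simp

lemma lookup_pvar_mult: "lk (pvar w * G) \<beta> = (if lk \<beta> w \<ge> 1 then lk G (\<beta> - e w) else 0)"
proof -
  have "lk (pvar w * G) \<beta> = Sum_any (\<lambda>q. lk G q when \<beta> = e w + q)"
    unfolding pvar_def lookup_single_mult by simp
  also have "\<dots> = Sum_any (\<lambda>q. lk G q when lk \<beta> w \<ge> 1 \<and> q = \<beta> - e w)"
    unfolding eq_add_e_iff ..
  also have "\<dots> = (if lk \<beta> w \<ge> 1 then lk G (\<beta> - e w) else 0)"
    by (cases "lk \<beta> w \<ge> 1") simp_all
  finally show ?thesis .
qed

lemma lookup_K_mult: "lk (K c * G) \<beta> = c * lk G \<beta>"
  unfolding lookup_single_mult by simp

lemma sum_when_eq: "finite S \<Longrightarrow> (\<Sum>a\<in>S. (f a when a = b)) = (if b \<in> S then f b else 0)"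
  by (simp add: when_def)

lemma lookup_pd: "lk (pd v P) \<beta> = of_nat (lk \<beta> v + 1) * lk P (\<beta> + e v)"
proof -
  have "lk (pd v P) \<beta> = (\<Sum>\<alpha>\<in>ks P. (of_nat (lk \<alpha> v) * lk P \<alpha> when \<alpha> - e v = \<beta>))"
    unfolding pd_def lookup_sum lookup_single by (simp add: when_def eq_commute)
  also have "\<dots> = (\<Sum>\<alpha>\<in>ks P. (of_nat (lk \<alpha> v) * lk P \<alpha> when \<alpha> = \<beta> + e v))"
  proof (rule sum.cong[OF refl])
    fix \<alpha>
    show "(of_nat (lk \<alpha> v) * lk P \<alpha> when \<alpha> - e v = \<beta>) = (of_nat (lk \<alpha> v) * lk P \<alpha> when \<alpha> = \<beta> + e v)"
    proof (cases "\<alpha> = \<beta> + e v")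
      case True
      then have "\<alpha> - e v = \<beta>" by (simp add: poly_mapping_eq_iff fun_eq_iff lookup_add lookup_minus)
      then show ?thesis using True by simp
    next
      case False
      have "lk \<alpha> v = 0" if "\<alpha> - e v = \<beta>"
      proof (rule ccontr)
        assume "lk \<alpha> v \<noteq> 0"
        then have "\<alpha> = \<beta> + e v" using that
          unfolding poly_mapping_eq_iff fun_eq_iff lookup_add lookup_minus
        proof (intro allI)
          fix x assume h: "lk \<alpha> v \<noteq> 0" "\<forall>x. lk \<alpha> x - lk (e v) x = lk \<beta> x"
          from h(2)[rule_format, of x] h(1) show "lk \<alpha> x = lk \<beta> x + lk (e v) x"
            by (cases "v = x") (auto simp: lookup_e)
        qed
        then show False using False by simp
      qed
      then show ?thesis using False by (auto simp: when_def)
    qed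
  qed
  also have "\<dots> = of_nat (lk \<beta> v + 1) * lk P (\<beta> + e v)"
    by (subst sum_when_eq) (auto simp: lookup_add in_keys_iff)
  finally show ?thesis .
qed


lemmas mon_simps = poly_mapping_eq_iff fun_eq_iff lookup_add lookup_minus lookup_e

lemma pd_add: "pd v (A + B) = pd v A + pd v B"
  by (rule poly_mapping_eqI) (simp add: lookup_pd lookup_add algebra_simps)
lemma pd_diff: "pd v (A - B) = pd v A - pd v B"
  by (rule poly_mapping_eqI) (simp add: lookup_pd lookup_minus algebra_simps)
lemma pd_zero[simp]: "pd v 0 = 0"
  by (rule poly_mapping_eqI) (simp add: lookup_pd)
lemma pd_uminus: "pd v (- A) = - pd v A"
  by (rule poly_mapping_eqI) (simp add: lookup_pd)
lemma pd_sum: "pd v (\<Sum>i\<in>S. f i) = (\<Sum>i\<in>S. pd v (f i))"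
  by (induction S rule: infinite_finite_induct) (simp_all add: pd_add)
lemma pd_K: "pd v (K c * A) = K c * pd v A"
  by (rule poly_mapping_eqI) (simp only: lookup_pd lookup_K_mult mult.left_commute)

lemma pd_pvar: "pd v (pvar w * G) = (if v = w then G else 0) + pvar w * pd v G"
proof (rule poly_mapping_eqI)
  fix \<beta>
  show "lk (pd v (pvar w * G)) \<beta> = lk ((if v = w then G else 0) + pvar w * pd v G) \<beta>"
  proof (cases "v = w")
    case True
    show ?thesis
    proof (cases "lk \<beta> v \<ge> 1")
      case True
      have e1: "\<beta> + e v - e v = \<beta>" by (simp add: mon_simps)
      have e2: "\<beta> - e v + e v = \<beta>" using True by (auto simp: mon_simps)
      have e3: "lk (\<beta> - e v) v + 1 = lk \<beta> v" using True by (simp add: lookup_minus lookup_e)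
      show ?thesis using True unfolding \<open>v = w\<close>[symmetric]
        by (simp only: lookup_pd lookup_pvar_mult lookup_add e1 e2 lookup_e e3[symmetric])
           (simp add: algebra_simps)
    next
      case False
      have e1: "\<beta> + e v - e v = \<beta>" by (simp add: mon_simps)
      show ?thesis using False \<open>v = w\<close>
        by (simp add: lookup_pd lookup_pvar_mult lookup_add e1 lookup_e)
    qed
  next
    case False
    show ?thesis
    proof (cases "lk \<beta> w \<ge> 1")
      case True
      have e1: "\<beta> + e v - e w = \<beta> - e w + e v" using True False by (auto simp: mon_simps)
      have e3: "lk (\<beta> - e w) v = lk \<beta> v" using False by (simp add: lookup_minus lookup_e)
      show ?thesis using True False
        by (simp only: lookup_pd lookup_pvar_mult lookup_add e1 lookup_e e3) simp
    next
      case False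
      show ?thesis using False \<open>v \<noteq> w\<close>
        by (simp add: lookup_pd lookup_pvar_mult lookup_add lookup_e)
    qed
  qed
qed

lemma pd_comm: "pd v (pd w P) = pd w (pd v P)"
proof (rule poly_mapping_eqI)
  fix \<beta>
  have "\<beta> + e v + e w = \<beta> + e w + e v" by (simp add: add_ac)
  moreover have "lk (\<beta> + e v) w = lk \<beta> w + (if v = w then 1 else 0)" by (simp add: lookup_add lookup_e)
  moreover have "lk (\<beta> + e w) v = lk \<beta> v + (if v = w then 1 else 0)" by (simp add: lookup_add lookup_e)
  ultimately show "lk (pd v (pd w P)) \<beta> = lk (pd w (pd v P)) \<beta>"
    by (simp add: lookup_pd algebra_simps)
qed


definition V :: "nat \<Rightarrow> nat \<Rightarrow> cpoly" where "V a j = pvar (a + j)"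
definition mulp :: "nat \<Rightarrow> nat \<Rightarrow> nat \<Rightarrow> cpoly \<Rightarrow> cpoly" where
  "mulp m a b G = (\<Sum>j<m. V a j * (V b j * G))"
definition dp :: "nat \<Rightarrow> nat \<Rightarrow> nat \<Rightarrow> cpoly \<Rightarrow> cpoly" where
  "dp m a b G = (\<Sum>j<m. pd (a + j) (pd (b + j) G))"
definition mx :: "nat \<Rightarrow> nat \<Rightarrow> nat \<Rightarrow> cpoly \<Rightarrow> cpoly" where
  "mx m a b G = (\<Sum>j<m. V a j * pd (b + j) G)"

definition off :: "nat \<Rightarrow> nat \<Rightarrow> bool" where "off m a \<longleftrightarrow> a = 0 \<or> a = m"

lemma off_eq: "off m a \<Longrightarrow> off m c \<Longrightarrow> j < m \<Longrightarrow> i < m \<Longrightarrow> (a + j = c + i) \<longleftrightarrow> (a = c \<and> j = i)"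
  unfolding off_def by auto

lemma sum_delta_off:
  assumes "off m a" "off m c" "j < m"
  shows "(\<Sum>i<m. (if a + j = c + i then f i else 0)) = (if a = c then f j else (0::cpoly))"
proof -
  have "(\<Sum>i<m. (if a + j = c + i then f i else 0)) = (\<Sum>i<m. (if a = c \<and> i = j then f i else 0))"
    using off_eq[OF assms(1,2) assms(3)] by (intro sum.cong) auto
  also have "\<dots> = (if a = c then f j else 0)" using assms(3) by (cases "a = c") auto
  finally show ?thesis .
qed

lemma mulp_add: "mulp m a b (A + B) = mulp m a b A + mulp m a b B"
  by (simp add: mulp_def distrib_left sum.distrib)
lemma mulp_diff: "mulp m a b (A - B) = mulp m a b A - mulp m a b B"
  by (simp add: mulp_def right_diff_distrib sum_subtractf)
lemma mulp_K: "mulp m a b (K c * A) = K c * mulp m a b A"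
  by (simp add: mulp_def sum_distrib_left mult.left_commute)
lemma mulp_zero[simp]: "mulp m a b 0 = 0"
  by (simp add: mulp_def)
lemma mulp_sum: "mulp m a b (\<Sum>i\<in>S. f i) = (\<Sum>i\<in>S. mulp m a b (f i))"
  by (induction S rule: infinite_finite_induct) (simp_all add: mulp_add)
lemma mulp_mult: "mulp m a b (A * B) = A * mulp m a b B"
  by (simp add: mulp_def sum_distrib_left mult.left_commute)
lemma mulp_mult': "mulp m a b A = mulp m a b 1 * A"
  by (simp add: mulp_def sum_distrib_right mult.assoc)
lemma mulp_comm: "mulp m a b G = mulp m b a G"
  by (simp add: mulp_def mult.left_commute)

lemma dp_add: "dp m a b (A + B) = dp m a b A + dp m a b B"
  by (simp add: dp_def pd_add sum.distrib)
lemma dp_diff: "dp m a b (A - B) = dp m a b A - dp m a b B"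
  by (simp add: dp_def pd_diff sum_subtractf)
lemma dp_K: "dp m a b (K c * A) = K c * dp m a b A"
  by (simp add: dp_def pd_K sum_distrib_left)
lemma dp_zero[simp]: "dp m a b 0 = 0"
  by (simp add: dp_def)
lemma dp_sum: "dp m a b (\<Sum>i\<in>S. f i) = (\<Sum>i\<in>S. dp m a b (f i))"
  by (induction S rule: infinite_finite_induct) (simp_all add: dp_add)
lemma dp_comm: "dp m a b G = dp m b a G"
  by (simp add: dp_def pd_comm)

lemma mx_add: "mx m a b (A + B) = mx m a b A + mx m a b B"
  by (simp add: mx_def pd_add distrib_left sum.distrib)
lemma mx_diff: "mx m a b (A - B) = mx m a b A - mx m a b B"
  by (simp add: mx_def pd_diff right_diff_distrib sum_subtractf)
lemma mx_K: "mx m a b (K c * A) = K c * mx m a b A"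
  by (simp add: mx_def pd_K sum_distrib_left mult.left_commute)
lemma mx_zero[simp]: "mx m a b 0 = 0"
  by (simp add: mx_def)
lemma mx_sum: "mx m a b (\<Sum>i\<in>S. f i) = (\<Sum>i\<in>S. mx m a b (f i))"
  by (induction S rule: infinite_finite_induct) (simp_all add: mx_add)

lemma pd_sum': "pd v (sum f S) = sum (\<lambda>i. pd v (f i)) S" by (rule pd_sum)

lemma pd_V: "off m s \<Longrightarrow> off m c \<Longrightarrow> j < m \<Longrightarrow> i < m \<Longrightarrow>
   pd (s + j) (V c i * G) = (if s = c \<and> j = i then G else 0) + V c i * pd (s + j) G"
  unfolding V_def using pd_pvar[of "s + j" "c + i" G] off_eq[of m s c j i] by simp

lemma pd_V': "pd v (V c i * G) = (if v = c + i then G else 0) + V c i * pd v G"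
  unfolding V_def by (rule pd_pvar)

lemma R1:
  assumes "off m s" "off m c" "off m d" "j < m"
  shows "pd (s + j) (mulp m c d G) = mulp m c d (pd (s + j) G)
          + (if s = c then V d j * G else 0) + (if s = d then V c j * G else 0)"
proof -
  have "pd (s + j) (mulp m c d G) = (\<Sum>i<m. pd (s+j) (V c i * (V d i * G)))"
    by (simp add: mulp_def pd_sum)
  also have "\<dots> = (\<Sum>i<m. (if s + j = c + i then V d i * G else 0)
        + ((if s + j = d + i then V c i * G else 0) + V c i * (V d i * pd (s+j) G)))"
    by (intro sum.cong refl) (simp only: pd_V' distrib_left pd_add if_distrib[where f="(*) (V c _)"] mult_zero_right)
  also have "\<dots> = (\<Sum>i<m. (if s + j = c + i then V d i * G else 0))
        + (\<Sum>i<m. (if s + j = d + i then V c i * G else 0)) + mulp m c d (pd (s + j) G)"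
    by (simp only: sum.distrib mulp_def add.assoc)
  also have "\<dots> = mulp m c d (pd (s + j) G)
          + (if s = c then V d j * G else 0) + (if s = d then V c j * G else 0)"
    by (simp add: sum_delta_off assms)
  finally show ?thesis .
qed


lemma R2:
  assumes "off m s" "off m c" "j < m"
  shows "pd (s + j) (mx m c d G) = mx m c d (pd (s + j) G) + (if s = c then pd (d + j) G else 0)"
proof -
  have "pd (s + j) (mx m c d G) = (\<Sum>i<m. (if s + j = c + i then pd (d + i) G else 0)
        + V c i * pd (d + i) (pd (s + j) G))"
    by (simp only: mx_def pd_sum pd_V' pd_comm)
  also have "\<dots> = (\<Sum>i<m. (if s + j = c + i then pd (d + i) G else 0)) + mx m c d (pd (s + j) G)"
    by (simp only: sum.distrib mx_def)
  also have "\<dots> = mx m c d (pd (s + j) G) + (if s = c then pd (d + j) G else 0)"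
    by (simp add: sum_delta_off assms)
  finally show ?thesis .
qed

lemma R3:
  assumes "off m a" "off m d" "j < m"
  shows "V a j * mx m c d H = mx m c d (V a j * H) - (if d = a then V c j * H else 0)"
proof -
  have "mx m c d (V a j * H) = (\<Sum>i<m. (if a + j = d + i then V c i * H else 0) + V a j * (V c i * pd (d + i) H))"
    unfolding mx_def by (intro sum.cong refl)
       (simp only: pd_V' distrib_left eq_commute[of "d + _"] if_distrib[where f="(*) (V c _)"]
         mult_zero_right mult.left_commute)
  also have "\<dots> = (\<Sum>i<m. (if a + j = d + i then V c i * H else 0)) + V a j * mx m c d H"
    by (simp only: sum.distrib mx_def sum_distrib_left)
  also have "\<dots> = (if d = a then V c j * H else 0) + V a j * mx m c d H"
    using assms by (simp add: sum_delta_off eq_commute[of a d])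
  finally show ?thesis by simp
qed

lemma sum_if_const: "(\<Sum>j\<in>S. (if P then f j else 0)) = (if P then (\<Sum>j\<in>S. f j) else (0::cpoly))"
  by simp

lemma C1:
  assumes "off m a" "off m b" "off m c" "off m d"
  shows "mx m a b (mulp m c d G) = mulp m c d (mx m a b G)
     + (if b = c then mulp m a d G else 0) + (if b = d then mulp m a c G else 0)"
proof -
  have "mx m a b (mulp m c d G) = (\<Sum>j<m. mulp m c d (V a j * pd (b + j) G)
      + (if b = c then V a j * (V d j * G) else 0) + (if b = d then V a j * (V c j * G) else 0))"
    unfolding mx_def
    by (intro sum.cong refl) (simp add: R1 assms distrib_left mulp_mult)
  also have "\<dots> = mulp m c d (mx m a b G)
     + (if b = c then mulp m a d G else 0) + (if b = d then mulp m a c G else 0)"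
    by (simp only: sum.distrib sum_if_const mx_def mulp_sum) (simp only: mulp_def)
  finally show ?thesis .
qed

lemma C2:
  assumes "off m a" "off m b" "off m c" "off m d"
  shows "dp m a b (mulp m c d G) = mulp m c d (dp m a b G)
     + (if a = c then mx m d b G else 0) + (if a = d then mx m c b G else 0)
     + (if b = c then mx m d a G else 0) + (if b = d then mx m c a G else 0)
     + (if b = c \<and> a = d then of_nat m * G else 0) + (if b = d \<and> a = c then of_nat m * G else 0)"
proof -
  have step: "pd (a + j) (pd (b + j) (mulp m c d G)) = mulp m c d (pd (a + j) (pd (b + j) G))
     + (if a = c then V d j * pd (b + j) G else 0) + (if a = d then V c j * pd (b + j) G else 0)
     + (if b = c then V d j * pd (a + j) G else 0) + (if b = d then V c j * pd (a + j) G else 0)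
     + (if b = c \<and> a = d then G else 0) + (if b = d \<and> a = c then G else 0)" if j: "j < m" for j
  proof -
    have "pd (a + j) (pd (b + j) (mulp m c d G)) = pd (a + j) (mulp m c d (pd (b + j) G))
          + (if b = c then pd (a + j) (V d j * G) else 0) + (if b = d then pd (a + j) (V c j * G) else 0)"
      by (simp add: R1[OF assms(2,3,4) j] pd_add)
    also have "\<dots> = mulp m c d (pd (a + j) (pd (b + j) G))
     + (if a = c then V d j * pd (b + j) G else 0) + (if a = d then V c j * pd (b + j) G else 0)
     + (if b = c then (if a = d then G else 0) + V d j * pd (a + j) G else 0)
     + (if b = d then (if a = c then G else 0) + V c j * pd (a + j) G else 0)"
      by (simp only: R1[OF assms(1,3,4) j] pd_V' add_right_cancel)
    also have "\<dots> = mulp m c d (pd (a + j) (pd (b + j) G))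
     + (if a = c then V d j * pd (b + j) G else 0) + (if a = d then V c j * pd (b + j) G else 0)
     + (if b = c then V d j * pd (a + j) G else 0) + (if b = d then V c j * pd (a + j) G else 0)
     + (if b = c \<and> a = d then G else 0) + (if b = d \<and> a = c then G else 0)"
      by (cases "b = c"; cases "a = d"; cases "b = d"; cases "a = c") (simp_all add: algebra_simps)
    finally show ?thesis .
  qed
  have "dp m a b (mulp m c d G) = (\<Sum>j<m. mulp m c d (pd (a + j) (pd (b + j) G))
     + (if a = c then V d j * pd (b + j) G else 0) + (if a = d then V c j * pd (b + j) G else 0)
     + (if b = c then V d j * pd (a + j) G else 0) + (if b = d then V c j * pd (a + j) G else 0)
     + (if b = c \<and> a = d then G else 0) + (if b = d \<and> a = c then G else 0))"
    unfolding dp_def by (intro sum.cong refl) (simp add: step)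
  also have "\<dots> = mulp m c d (dp m a b G)
     + (if a = c then mx m d b G else 0) + (if a = d then mx m c b G else 0)
     + (if b = c then mx m d a G else 0) + (if b = d then mx m c a G else 0)
     + (if b = c \<and> a = d then of_nat m * G else 0) + (if b = d \<and> a = c then of_nat m * G else 0)"
    by (simp only: sum.distrib sum_if_const dp_def mulp_sum sum_constant) (simp add: mx_def of_nat_mult)
  finally show ?thesis .
qed
lemma C3:
  assumes "off m a" "off m b" "off m c"
  shows "dp m a b (mx m c d G) = mx m c d (dp m a b G)
     + (if a = c then dp m d b G else 0) + (if b = c then dp m a d G else 0)"
proof -
  have step: "pd (a + j) (pd (b + j) (mx m c d G)) = mx m c d (pd (a + j) (pd (b + j) G))
     + (if a = c then pd (d + j) (pd (b + j) G) else 0) + (if b = c then pd (a + j) (pd (d + j) G) else 0)"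
    if j: "j < m" for j
    by (simp only: R2[OF assms(2,3) j] R2[OF assms(1,3) j] pd_add pd_comm[of "d + j" "b + j"])
       (cases "a = c"; cases "b = c"; simp add: algebra_simps)
  have "dp m a b (mx m c d G) = (\<Sum>j<m. mx m c d (pd (a + j) (pd (b + j) G))
     + (if a = c then pd (d + j) (pd (b + j) G) else 0) + (if b = c then pd (a + j) (pd (d + j) G) else 0))"
    unfolding dp_def by (intro sum.cong refl) (simp add: step)
  also have "\<dots> = mx m c d (dp m a b G)
     + (if a = c then dp m d b G else 0) + (if b = c then dp m a d G else 0)"
    by (simp only: sum.distrib sum_if_const mx_sum dp_def)
  finally show ?thesis .
qed

lemma C4:
  assumes "off m a" "off m b" "off m c" "off m d"
  shows "mx m a b (mx m c d G) = mx m c d (mx m a b G)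
     + (if b = c then mx m a d G else 0) - (if a = d then mx m c b G else 0)"
proof -
  have step: "V a j * pd (b + j) (mx m c d G) = mx m c d (V a j * pd (b + j) G)
     - (if d = a then V c j * pd (b + j) G else 0) + (if b = c then V a j * pd (d + j) G else 0)"
    if j: "j < m" for j
    by (simp only: R2[OF assms(2,3) j] distrib_left R3[OF assms(1,4) j])
       (cases "b = c"; simp)
  have "mx m a b (mx m c d G) = (\<Sum>j<m. mx m c d (V a j * pd (b + j) G)
     - (if d = a then V c j * pd (b + j) G else 0) + (if b = c then V a j * pd (d + j) G else 0))"
    unfolding mx_def[of m a b] by (intro sum.cong refl) (simp add: step)
  also have "\<dots> = mx m c d (mx m a b G)
     + (if b = c then mx m a d G else 0) - (if a = d then mx m c b G else 0)"
    unfolding sum.distrib sum_subtractf sum_if_const mx_sum[symmetric]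
    by (simp add: mx_def eq_commute[of d a])
  finally show ?thesis .
qed

lemma pd4: "pd A (pd B (pd C (pd D G))) = pd C (pd D (pd A (pd B G)))"
proof -
  have "pd A (pd B (pd C (pd D G))) = pd A (pd C (pd B (pd D G)))" by (simp only: pd_comm[of B C])
  also have "\<dots> = pd C (pd A (pd B (pd D G)))" by (rule pd_comm)
  also have "\<dots> = pd C (pd A (pd D (pd B G)))" by (simp only: pd_comm[of B D])
  also have "\<dots> = pd C (pd D (pd A (pd B G)))" by (simp only: pd_comm[of A D])
  finally show ?thesis .
qed

lemma C5: "dp m a b (dp m c d G) = dp m c d (dp m a b G)"
proof -
  have "dp m a b (dp m c d G) = (\<Sum>j<m. \<Sum>i<m. pd (a + j) (pd (b + j) (pd (c + i) (pd (d + i) G))))"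
    by (simp only: dp_def pd_sum)
  also have "\<dots> = (\<Sum>i<m. \<Sum>j<m. pd (c + i) (pd (d + i) (pd (a + j) (pd (b + j) G))))"
    by (subst sum.swap) (simp only: pd4)
  also have "\<dots> = dp m c d (dp m a b G)"
    by (simp only: dp_def pd_sum)
  finally show ?thesis .
qed
lemma lookup_V_pd: "lk (V a j * pd (a + j) G) \<beta> = of_nat (lk \<beta> (a + j)) * lk G \<beta>"
proof (cases "lk \<beta> (a + j) \<ge> 1")
  case True
  have e2: "\<beta> - e (a+j) + e (a+j) = \<beta>" using True by (auto simp: mon_simps)
  have e3: "lk (\<beta> - e (a+j)) (a+j) + 1 = lk \<beta> (a+j)" using True by (simp add: lookup_minus lookup_e)
  show ?thesis unfolding V_def
    by (simp only: lookup_pvar_mult lookup_pd e2 e3 if_P[OF True])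
next
  case False
  then show ?thesis unfolding V_def by (simp add: lookup_pvar_mult)
qed

lemma lookup_of_nat_mult: "lk (of_nat p * (G::cpoly)) \<beta> = of_nat p * lk G \<beta>"
  using lookup_K_mult[of "of_nat p" G \<beta>] by simp

lemma euler_x: assumes "bihom m p q G" shows "mx m 0 0 G = of_nat p * G"
proof (rule poly_mapping_eqI)
  fix \<beta>
  have "lk (mx m 0 0 G) \<beta> = (\<Sum>j<m. of_nat (lk \<beta> j) * lk G \<beta>)"
    unfolding mx_def lookup_sum using lookup_V_pd[of 0 _ G \<beta>] by simp
  also have "\<dots> = of_nat (\<Sum>j<m. lk \<beta> j) * lk G \<beta>" by (simp add: sum_distrib_right)
  also have "\<dots> = of_nat p * lk G \<beta>"
    using assms unfolding bihom_def by (cases "\<beta> \<in> ks G") (auto simp: in_keys_iff)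
  finally show "lk (mx m 0 0 G) \<beta> = lk (of_nat p * G) \<beta>" by (simp add: lookup_of_nat_mult)
qed

lemma euler_u: assumes "bihom m p q G" shows "mx m m m G = of_nat q * G"
proof (rule poly_mapping_eqI)
  fix \<beta>
  have "lk (mx m m m G) \<beta> = (\<Sum>j<m. of_nat (lk \<beta> (m + j)) * lk G \<beta>)"
    unfolding mx_def lookup_sum using lookup_V_pd[of m _ G \<beta>] by simp
  also have "\<dots> = of_nat (\<Sum>j<m. lk \<beta> (m + j)) * lk G \<beta>" by (simp add: sum_distrib_right)
  also have "\<dots> = of_nat q * lk G \<beta>"
    using assms unfolding bihom_def by (cases "\<beta> \<in> ks G") (auto simp: in_keys_iff)
  finally show "lk (mx m m m G) \<beta> = lk (of_nat q * G) \<beta>" by (simp add: lookup_of_nat_mult)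
qed
definition good :: "nat \<Rightarrow> nat \<Rightarrow> nat \<Rightarrow> (nat \<Rightarrow>\<^sub>0 nat) \<Rightarrow> bool" where
  "good m p q \<beta> \<longleftrightarrow> ks \<beta> \<subseteq> {..<2*m} \<and> (\<Sum>j<m. lk \<beta> j) = p \<and> (\<Sum>j<m. lk \<beta> (m + j)) = q"

lemma bihom_iff: "bihom m p q G \<longleftrightarrow> (\<forall>\<beta>. lk G \<beta> \<noteq> 0 \<longrightarrow> good m p q \<beta>)"
  unfolding bihom_def good_def by (auto simp: in_keys_iff)

lemma sx_add_e: "(\<Sum>j<m. lk (\<beta> + e v) j) = (\<Sum>j<m. lk \<beta> j) + (if v < m then 1 else 0)"
proof -
  have "(\<Sum>j<m. lk (\<beta> + e v) j) = (\<Sum>j<m. lk \<beta> j) + (\<Sum>j<m. if v = j then 1 else 0)"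
    by (simp add: lookup_add sum.distrib)
  then show ?thesis by simp
qed

lemma su_add_e: "(\<Sum>j<m. lk (\<beta> + e v) (m + j)) = (\<Sum>j<m. lk \<beta> (m + j)) + (if m \<le> v \<and> v < 2*m then 1 else 0)"
proof -
  have "(\<Sum>j<m. lk (\<beta> + e v) (m + j)) = (\<Sum>j<m. lk \<beta> (m + j)) + (\<Sum>j<m. if v = m + j then 1 else 0)"
    by (simp add: lookup_add sum.distrib)
  moreover have "(\<Sum>j<m. if v = m + j then 1 else (0::nat)) = (\<Sum>j<m. if j = v - m \<and> m \<le> v then 1 else 0)"
    by (intro sum.cong) auto
  moreover have "\<dots> = (if m \<le> v \<and> v < 2*m then 1 else 0)"
    by (cases "m \<le> v") (auto simp: sum.delta)
  ultimately show ?thesis by simp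
qed

lemma ks_add_e: "ks (\<beta> + e v) \<subseteq> ks \<beta> \<union> {v}"
  by (auto simp: in_keys_iff lookup_add split: if_splits)
lemma ks_add_e': "ks \<beta> \<subseteq> ks (\<beta> + e v)"
  by (auto simp: in_keys_iff lookup_add)

lemma good_add_e_iff:
  assumes "v < 2*m"
  shows "good m p q (\<beta> + e v) \<longleftrightarrow> ks \<beta> \<subseteq> {..<2*m} \<and>
     (\<Sum>j<m. lk \<beta> j) + (if v < m then 1 else 0) = p \<and> (\<Sum>j<m. lk \<beta> (m + j)) + (if m \<le> v then 1 else 0) = q"
proof -
  have "ks (\<beta> + e v) \<subseteq> {..<2*m} \<longleftrightarrow> ks \<beta> \<subseteq> {..<2*m}"
    using ks_add_e[of \<beta> v] ks_add_e'[of \<beta> v] assms by auto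
  then show ?thesis unfolding good_def sx_add_e su_add_e using assms by auto
qed

lemma minus_e_add: "lk \<beta> v \<ge> 1 \<Longrightarrow> \<beta> - e v + e v = \<beta>"
  by (auto simp: mon_simps)
lemma add_e_minus: "\<beta> + e v - e v = \<beta>"
  by (simp add: mon_simps)
lemma bihom_zero[simp]: "bihom m p q 0"
  by (simp add: bihom_iff)
lemma bihom_add: "bihom m p q A \<Longrightarrow> bihom m p q B \<Longrightarrow> bihom m p q (A + B)"
  unfolding bihom_iff lookup_add by (metis add.right_neutral add_0)
lemma bihom_diff: "bihom m p q A \<Longrightarrow> bihom m p q B \<Longrightarrow> bihom m p q (A - B)"
  unfolding bihom_iff lookup_minus by (metis diff_zero diff_self)
lemma bihom_K: "bihom m p q A \<Longrightarrow> bihom m p q (K c * A)"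
  by (auto simp: bihom_iff lookup_K_mult)
lemma bihom_sum: "(\<And>i. i \<in> S \<Longrightarrow> bihom m p q (f i)) \<Longrightarrow> bihom m p q (\<Sum>i\<in>S. f i)"
  by (induction S rule: infinite_finite_induct) (auto intro: bihom_add)

lemma bihom_pvar:
  assumes "v < 2*m" "bihom m p q G"
  shows "bihom m (p + (if v < m then 1 else 0)) (q + (if m \<le> v then 1 else 0)) (pvar v * G)"
  unfolding bihom_iff
proof (intro allI impI)
  fix \<beta> assume "lk (pvar v * G) \<beta> \<noteq> 0"
  then have h: "lk \<beta> v \<ge> 1" "lk G (\<beta> - e v) \<noteq> 0" by (auto simp: lookup_pvar_mult split: if_splits)
  then have "good m p q (\<beta> - e v)" using assms(2) by (auto simp: bihom_iff)
  then have "good m (p + (if v < m then 1 else 0)) (q + (if m \<le> v then 1 else 0)) (\<beta> - e v + e v)"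
    unfolding good_add_e_iff[OF assms(1)] by (simp add: good_def)
  then show "good m (p + (if v < m then 1 else 0)) (q + (if m \<le> v then 1 else 0)) \<beta>"
    using minus_e_add[OF h(1)] by simp
qed

lemma bihom_pd:
  assumes "v < 2*m" "bihom m p q G"
  shows "bihom m (p - (if v < m then 1 else 0)) (q - (if m \<le> v then 1 else 0)) (pd v G)"
  unfolding bihom_iff
proof (intro allI impI)
  fix \<beta> assume "lk (pd v G) \<beta> \<noteq> 0"
  then have "lk G (\<beta> + e v) \<noteq> 0" by (auto simp: lookup_pd)
  then have "good m p q (\<beta> + e v)" using assms(2) by (auto simp: bihom_iff)
  then show "good m (p - (if v < m then 1 else 0)) (q - (if m \<le> v then 1 else 0)) \<beta>"
    unfolding good_add_e_iff[OF assms(1)] by (auto simp: good_def)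
qed

lemma pd_vanish:
  assumes "v < 2*m" "bihom m p q G" "(v < m \<and> p = 0) \<or> (m \<le> v \<and> q = 0)"
  shows "pd v G = 0"
proof (rule poly_mapping_eqI, rule ccontr)
  fix \<beta> assume "lk (pd v G) \<beta> \<noteq> lk 0 \<beta>"
  then have "lk G (\<beta> + e v) \<noteq> 0" by (auto simp: lookup_pd)
  then have "good m p q (\<beta> + e v)" using assms(2) by (auto simp: bihom_iff)
  then show False unfolding good_add_e_iff[OF assms(1)] using assms(3) by auto
qed
definition fac :: "(nat \<Rightarrow>\<^sub>0 nat) \<Rightarrow> nat" where
  "fac \<alpha> = (\<Prod>w\<in>ks \<alpha>. fact (lk \<alpha> w))"

lemma fac_superset: "finite S \<Longrightarrow> ks \<alpha> \<subseteq> S \<Longrightarrow> fac \<alpha> = (\<Prod>w\<in>S. fact (lk \<alpha> w))"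
  unfolding fac_def by (rule prod.mono_neutral_left) (auto simp: in_keys_iff)

lemma fac_pos: "fac \<alpha> > 0"
  unfolding fac_def by (simp add: prod_pos)

lemma fac_add_e: "fac (\<alpha> + e v) = fac \<alpha> * (lk \<alpha> v + 1)"
proof -
  let ?S = "insert v (ks \<alpha>)"
  have fS: "finite ?S" by simp
  have "fac (\<alpha> + e v) = (\<Prod>w\<in>?S. fact (lk (\<alpha> + e v) w))"
    by (rule fac_superset[OF fS]) (use ks_add_e[of \<alpha> v] in auto)
  also have "\<dots> = fact (lk (\<alpha> + e v) v) * (\<Prod>w\<in>ks \<alpha> - {v}. fact (lk (\<alpha> + e v) w))"
    using fS by (simp add: prod.insert_remove)
  also have "(\<Prod>w\<in>ks \<alpha> - {v}. fact (lk (\<alpha> + e v) w)) = (\<Prod>w\<in>ks \<alpha> - {v}. fact (lk \<alpha> w))"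
    by (intro prod.cong refl) (auto simp: lookup_add)
  also have "fact (lk (\<alpha> + e v) v) = (lk \<alpha> v + 1) * fact (lk \<alpha> v)"
    by (simp add: lookup_add)
  also have "fac \<alpha> = (\<Prod>w\<in>?S. fact (lk \<alpha> w))"
    by (rule fac_superset[OF fS]) auto
  then have "fac \<alpha> = fact (lk \<alpha> v) * (\<Prod>w\<in>ks \<alpha> - {v}. fact (lk \<alpha> w))"
    using fS by (simp add: prod.insert_remove)
  ultimately show ?thesis by (simp add: algebra_simps)
qed

definition fip :: "cpoly \<Rightarrow> cpoly \<Rightarrow> complex" where
  "fip P Q = (\<Sum>\<alpha>\<in>ks P. of_nat (fac \<alpha>) * lk P \<alpha> * cnj (lk Q \<alpha>))"

lemma fip_superset: "finite S \<Longrightarrow> ks P \<subseteq> S \<Longrightarrow> fip P Q = (\<Sum>\<alpha>\<in>S. of_nat (fac \<alpha>) * lk P \<alpha> * cnj (lk Q \<alpha>))"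
  unfolding fip_def by (rule sum.mono_neutral_left) (auto simp: in_keys_iff)

lemma fip_add1: "fip (A + B) Q = fip A Q + fip B Q"
proof -
  let ?S = "ks A \<union> ks B"
  have f: "finite ?S" by simp
  have k: "ks (A + B) \<subseteq> ?S" by (auto simp: in_keys_iff lookup_add)
  have a: "fip A Q = (\<Sum>\<alpha>\<in>?S. of_nat (fac \<alpha>) * lk A \<alpha> * cnj (lk Q \<alpha>))"
    by (rule fip_superset[OF f]) auto
  have b: "fip B Q = (\<Sum>\<alpha>\<in>?S. of_nat (fac \<alpha>) * lk B \<alpha> * cnj (lk Q \<alpha>))"
    by (rule fip_superset[OF f]) auto
  show ?thesis
    unfolding fip_superset[OF f k] a b
    by (simp add: lookup_add algebra_simps sum.distrib)
qed

lemma fip_zero1[simp]: "fip 0 Q = 0" by (simp add: fip_def)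

lemma fip_sum1: "fip (\<Sum>i\<in>I. f i) Q = (\<Sum>i\<in>I. fip (f i) Q)"
  by (induction I rule: infinite_finite_induct) (simp_all add: fip_add1)

lemma fip_zero2[simp]: "fip P 0 = 0" by (simp add: fip_def)

lemma fip_pvar: "fip (pvar v * A) Q = fip A (pd v Q)"
proof -
  let ?S = "(\<lambda>\<alpha>. \<alpha> + e v) ` ks A"
  have f: "finite ?S" by simp
  have k: "ks (pvar v * A) \<subseteq> ?S"
  proof
    fix \<beta> assume "\<beta> \<in> ks (pvar v * A)"
    then have h: "lk \<beta> v \<ge> 1" "lk A (\<beta> - e v) \<noteq> 0"
      by (auto simp: in_keys_iff lookup_pvar_mult split: if_splits)
    then show "\<beta> \<in> ?S" using minus_e_add[OF h(1)] by (auto simp: in_keys_iff intro!: image_eqI[of _ _ "\<beta> - e v"])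
  qed
  have inj: "inj_on (\<lambda>\<alpha>. \<alpha> + e v) (ks A)" by (auto simp: inj_on_def)
  have "fip (pvar v * A) Q = (\<Sum>\<alpha>\<in>ks A. of_nat (fac (\<alpha> + e v)) * lk (pvar v * A) (\<alpha> + e v) * cnj (lk Q (\<alpha> + e v)))"
    unfolding fip_superset[OF f k] sum.reindex[OF inj] by simp
  also have "\<dots> = (\<Sum>\<alpha>\<in>ks A. of_nat (fac \<alpha>) * lk A \<alpha> * cnj (lk (pd v Q) \<alpha>))"
    by (intro sum.cong refl) (simp add: fac_add_e[simplified] lookup_pvar_mult add_e_minus lookup_add lookup_pd, simp add: algebra_simps)
  finally show ?thesis unfolding fip_def .
qed

lemma fip_add2: "fip P (A + B) = fip P A + fip P B"
  by (simp add: fip_def lookup_add algebra_simps sum.distrib)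
lemma fip_sum2: "fip P (\<Sum>i\<in>I. f i) = (\<Sum>i\<in>I. fip P (f i))"
  by (induction I rule: infinite_finite_induct) (simp_all add: fip_add2)

lemma fip_self_zero: assumes "fip P P = 0" shows "P = 0"
proof -
  have eq0: "fip P P = (\<Sum>\<alpha>\<in>ks P. of_real (real (fac \<alpha>) * (cmod (lk P \<alpha>))\<^sup>2))"
    unfolding fip_def
    by (intro sum.cong refl) (simp only: of_real_mult complex_norm_square mult.assoc of_real_of_nat_eq)
  have eq: "fip P P = of_real (\<Sum>\<alpha>\<in>ks P. real (fac \<alpha>) * (cmod (lk P \<alpha>))\<^sup>2)"
    unfolding eq0 of_real_sum ..
  have "complex_of_real (\<Sum>\<alpha>\<in>ks P. real (fac \<alpha>) * (cmod (lk P \<alpha>))\<^sup>2) = 0" using assms eq by metis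
  then have "(\<Sum>\<alpha>\<in>ks P. real (fac \<alpha>) * (cmod (lk P \<alpha>))\<^sup>2) = 0" by (simp only: of_real_eq_0_iff)
  then have "\<forall>\<alpha>\<in>ks P. real (fac \<alpha>) * (cmod (lk P \<alpha>))\<^sup>2 = 0"
    by (subst (asm) sum_nonneg_eq_0_iff) auto
  then have "\<forall>\<alpha>\<in>ks P. False" using fac_pos by (metis less_numeral_extra(3) mult_eq_0_iff of_nat_eq_0_iff power_eq_0_iff norm_eq_zero in_keys_iff)
  then show ?thesis by (intro poly_mapping_eqI) (auto simp: in_keys_iff)
qed
lemma fip_mulp: "fip (mulp m a a A) P = fip A (dp m a a P)"
  unfolding mulp_def dp_def fip_sum1 fip_sum2 V_def by (simp add: fip_pvar)

lemma harm_ideal_zero: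
  assumes "dp m 0 0 P = 0" "dp m m m P = 0" "P = mulp m 0 0 A + mulp m m m B"
  shows "P = 0"
proof -
  have "fip P P = fip (mulp m 0 0 A) P + fip (mulp m m m B) P"
    by (subst (1) assms(3)) (simp add: fip_add1)
  also have "\<dots> = 0" by (simp add: fip_mulp assms(1,2))
  finally show ?thesis by (rule fip_self_zero)
qed

lemma lapx_eq: "lap_x m P = dp m 0 0 P" by (simp add: lap_x_def dp_def dx_def)
lemma lapu_eq: "lap_u m P = dp m m m P" by (simp add: lap_u_def dp_def du_def)
lemma harm_eq: "harm m P \<longleftrightarrow> dp m 0 0 P = 0 \<and> dp m m m P = 0"
  by (simp add: harm_def lapx_eq lapu_eq)
lemma udx_eq: "u_dx m P = mx m m 0 P" by (simp add: u_dx_def mx_def uvar_def dx_def V_def)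
lemma ux_eq: "ux m * P = mulp m m 0 P"
  by (simp add: ux_def mulp_def uvar_def xvar_def V_def sum_distrib_right mult.assoc)
lemma nx_eq: "normx2 m * P = mulp m 0 0 P"
  by (simp add: normx2_def mulp_def xvar_def V_def sum_distrib_right mult.assoc)
lemma nu_eq: "normu2 m * P = mulp m m m P"
  by (simp add: normu2_def mulp_def uvar_def V_def sum_distrib_right mult.assoc)

lemma nxnu_eq: "normx2 m * normu2 m * P = mulp m 0 0 (mulp m m m P)"
  by (simp only: mult.assoc nu_eq) (simp only: nx_eq)

lemma sum_split0: "(\<Sum>a\<le>(A::nat). f a) = f 0 + (\<Sum>a\<in>{Suc 0..A}. f a)"
proof -
  have "{..A} = insert 0 {Suc 0..A}" by auto
  then show ?thesis by simp
qed

lemma decomp_general: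
  fixes G :: "nat \<Rightarrow> nat \<Rightarrow> cpoly"
  shows "\<exists>X Y. (\<Sum>a\<le>A. \<Sum>b\<le>B. normx2 m ^ a * normu2 m ^ b * G a b) = G 0 0 + mulp m 0 0 X + mulp m m m Y"
proof -
  define X where "X = (\<Sum>a\<in>{Suc 0..A}. \<Sum>b\<le>B. normx2 m ^ (a - 1) * normu2 m ^ b * G a b)"
  define Y where "Y = (\<Sum>b\<in>{Suc 0..B}. normu2 m ^ (b - 1) * G 0 b)"
  have 1: "(\<Sum>a\<in>{Suc 0..A}. \<Sum>b\<le>B. normx2 m ^ a * normu2 m ^ b * G a b) = normx2 m * X"
    unfolding X_def sum_distrib_left
    by (intro sum.cong refl) (auto simp: mult.assoc power_eq_if)
  have 2: "(\<Sum>b\<in>{Suc 0..B}. normu2 m ^ b * G 0 b) = normu2 m * Y"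
    unfolding Y_def sum_distrib_left
    by (intro sum.cong refl) (auto simp: mult.assoc power_eq_if)
  have "(\<Sum>a\<le>A. \<Sum>b\<le>B. normx2 m ^ a * normu2 m ^ b * G a b) = G 0 0 + normx2 m * X + normu2 m * Y"
    by (simp only: sum_split0[of _ A] 1) (simp add: sum_split0[of _ B] 2)
  then show ?thesis by (auto simp: nx_eq nu_eq)
qed

lemma sum_sparse: "(\<And>a. a \<ge> 2 \<Longrightarrow> f a = 0) \<Longrightarrow> (\<Sum>a\<le>(A::nat). f a) = f 0 + (if A \<ge> 1 then f 1 else (0::cpoly))"
proof (cases "A \<ge> 1")
  case True
  assume h: "\<And>a. a \<ge> 2 \<Longrightarrow> f a = 0"
  have "(\<Sum>a\<le>A. f a) = (\<Sum>a\<in>{0,1}. f a)"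
    using True h by (intro sum.mono_neutral_right) auto
  then show ?thesis using True by simp
next
  case False
  then have "A = 0" by simp
  then show ?thesis by simp
qed

lemma pi_s_eq:
  assumes "bihom m P Q Z"
    and "harm m G0" "harm m G10" "harm m G01" "harm m G11"
    and "bihom m P Q G0" "bihom m (P - 2) Q G10" "bihom m P (Q - 2) G01" "bihom m (P - 2) (Q - 2) G11"
    and "P < 2 \<Longrightarrow> G10 = 0 \<and> G11 = 0" "Q < 2 \<Longrightarrow> G01 = 0 \<and> G11 = 0"
    and Z: "Z = G0 + mulp m 0 0 G10 + mulp m m m G01 + mulp m 0 0 (mulp m m m G11)"
  shows "pi_s m Z = G0"
  unfolding pi_s_def
proof (rule the_equality)
  define G where "G = (\<lambda>(a::nat) (b::nat). if a = 0 \<and> b = 0 then G0 else if a = 1 \<and> b = 0 then G10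
     else if a = 0 \<and> b = 1 then G01 else if a = 1 \<and> b = 1 then G11 else 0)"
  have hb: "\<forall>a\<le>P div 2. \<forall>b\<le>Q div 2. bihom m (P - 2*a) (Q - 2*b) (G a b) \<and> harm m (G a b)"
    using assms(2-9) by (auto simp: G_def harm_eq)
  have inner: "(\<Sum>b\<le>Q div 2. normx2 m ^ a * normu2 m ^ b * G a b)
      = normx2 m ^ a * G a 0 + (if Q div 2 \<ge> 1 then normx2 m ^ a * normu2 m * G a 1 else 0)" for a
    by (subst sum_sparse) (auto simp: G_def)
  have "(\<Sum>a\<le>P div 2. \<Sum>b\<le>Q div 2. normx2 m ^ a * normu2 m ^ b * G a b)
     = (normx2 m ^ 0 * G 0 0 + (if Q div 2 \<ge> 1 then normx2 m ^ 0 * normu2 m * G 0 1 else 0))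
       + (if P div 2 \<ge> 1 then (normx2 m ^ 1 * G 1 0 + (if Q div 2 \<ge> 1 then normx2 m ^ 1 * normu2 m * G 1 1 else 0)) else 0)"
    unfolding inner by (subst sum_sparse) (auto simp: G_def)
  also have "\<dots> = Z"
    using assms(10,11) unfolding Z
    by (auto simp: G_def mult.assoc nu_eq) (auto simp: nx_eq)
  finally have hs: "Z = (\<Sum>a\<le>P div 2. \<Sum>b\<le>Q div 2. normx2 m ^ a * normu2 m ^ b * G a b)" ..
  show "\<exists>p q G. bihom m p q Z \<and> (\<forall>a\<le>p div 2. \<forall>b\<le>q div 2. bihom m (p - 2*a) (q - 2*b) (G a b) \<and> harm m (G a b))
      \<and> Z = (\<Sum>a\<le>p div 2. \<Sum>b\<le>q div 2. normx2 m ^ a * normu2 m ^ b * G a b) \<and> G0 = G 0 0"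
    using assms(1) hb hs by (intro exI[of _ P] exI[of _ Q] exI[of _ G]) (simp add: G_def)
next
  fix h assume "\<exists>p q G. bihom m p q Z \<and> (\<forall>a\<le>p div 2. \<forall>b\<le>q div 2. bihom m (p - 2*a) (q - 2*b) (G a b) \<and> harm m (G a b))
      \<and> Z = (\<Sum>a\<le>p div 2. \<Sum>b\<le>q div 2. normx2 m ^ a * normu2 m ^ b * G a b) \<and> h = G 0 0"
  then obtain p q G where h: "\<forall>a\<le>p div 2. \<forall>b\<le>q div 2. bihom m (p - 2*a) (q - 2*b) (G a b) \<and> harm m (G a b)"
    "Z = (\<Sum>a\<le>p div 2. \<Sum>b\<le>q div 2. normx2 m ^ a * normu2 m ^ b * G a b)" "h = G 0 0" by blast
  obtain X Y where XY: "Z = G 0 0 + mulp m 0 0 X + mulp m m m Y"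
    using decomp_general[where A="p div 2" and B="q div 2" and m=m and G=G] h(2) by auto
  have hh: "harm m h" using h(1,3) by auto
  have "h - G0 = mulp m 0 0 (G10 + mulp m m m G11 - X) + mulp m m m (G01 - Y)"
    using XY h(3) unfolding Z by (simp add: mulp_add mulp_diff algebra_simps)
  moreover have "dp m 0 0 (h - G0) = 0" "dp m m m (h - G0) = 0"
    using hh assms(2) by (auto simp: harm_eq dp_diff)
  ultimately have "h - G0 = 0" using harm_ideal_zero by blast
  then show "h = G0" by simp
qed
lemma harm_zero: "harm m 0" by (simp add: harm_eq)

lemma off0[simp]: "off m 0" and offm[simp]: "off m m" by (simp_all add: off_def)

lemma mulp00: "mulp m 0 0 G = normx2 m * G" by (simp add: nx_eq)
lemma mulpmm: "mulp m m m G = normu2 m * G" by (simp add: nu_eq)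
lemma mulpm0: "mulp m m 0 G = ux m * G" by (simp add: ux_eq)
lemma mulp0m: "mulp m 0 m G = ux m * G" by (simp add: ux_eq mulp_comm)

lemmas mulp_rw = mulp00 mulpmm mulpm0 mulp0m

lemma dp0m: "dp m 0 m G = dp m m 0 G" by (rule dp_comm)

context fixes m :: nat assumes m0: "m \<noteq> 0"
begin
lemma S1: "dp m 0 0 (ux m * G) = ux m * dp m 0 0 G + mx m m 0 G + mx m m 0 G"
  using C2[of m 0 0 m 0 G] m0 by (simp add: mulp_rw)
lemma S2: "dp m m m (ux m * G) = ux m * dp m m m G + mx m 0 m G + mx m 0 m G"
  using C2[of m m m m 0 G] m0 by (simp add: mulp_rw)
lemma S3: "dp m 0 0 (normx2 m * G) = normx2 m * dp m 0 0 G + 4 * mx m 0 0 G + 2 * of_nat m * G"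
  using C2[of m 0 0 0 0 G] m0 by (simp add: mulp_rw algebra_simps)
lemma S4: "dp m m m (normu2 m * G) = normu2 m * dp m m m G + 4 * mx m m m G + 2 * of_nat m * G"
  using C2[of m m m m m G] m0 by (simp add: mulp_rw algebra_simps)
lemma S5: "dp m 0 0 (normu2 m * G) = normu2 m * dp m 0 0 G"
  using C2[of m 0 0 m m G] m0 by (simp add: mulp_rw)
lemma S6: "dp m m m (normx2 m * G) = normx2 m * dp m m m G"
  using C2[of m m m 0 0 G] m0 by (simp add: mulp_rw)
lemma S7: "dp m 0 0 (mx m m 0 G) = mx m m 0 (dp m 0 0 G)"
  using C3[of m 0 0 m 0 G] m0 by simp
lemma S8: "dp m m m (mx m m 0 G) = mx m m 0 (dp m m m G) + dp m m 0 G + dp m m 0 G"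
  using C3[of m m m m 0 G] m0 by (simp add: dp0m)
lemma S9: "dp m 0 0 (mx m 0 m G) = mx m 0 m (dp m 0 0 G) + dp m m 0 G + dp m m 0 G"
  using C3[of m 0 0 0 m G] m0 by (simp add: dp0m)
lemma S10: "dp m m m (mx m 0 m G) = mx m 0 m (dp m m m G)"
  using C3[of m m m 0 m G] m0 by simp
lemma S11: "dp m 0 0 (dp m m 0 G) = dp m m 0 (dp m 0 0 G)" "dp m m m (dp m m 0 G) = dp m m 0 (dp m m m G)"
  by (rule C5)+
lemma S12: "mx m 0 0 (mx m m 0 G) = mx m m 0 (mx m 0 0 G) - mx m m 0 G"
  using C4[of m 0 0 m 0 G] m0 by simp
lemma S13: "mx m m m (mx m 0 m G) = mx m 0 m (mx m m m G) - mx m 0 m G"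
  using C4[of m m m 0 m G] m0 by simp
lemma S14: "mx m 0 0 (dp m m 0 G) = dp m m 0 (mx m 0 0 G) - dp m m 0 G"
  using C3[of m m 0 0 0 G] m0 by (simp add: algebra_simps)
lemma S15: "mx m m m (dp m m 0 G) = dp m m 0 (mx m m m G) - dp m m 0 G"
  using C3[of m m 0 m m G] m0 by (simp add: algebra_simps)
lemma S16: "mx m 0 0 (normu2 m * G) = normu2 m * mx m 0 0 G" "mx m m m (normx2 m * G) = normx2 m * mx m m m G"
  using C1[of m 0 0 m m G] C1[of m m m 0 0 G] m0 by (simp_all add: mulp_rw)
lemma S17: "mx m m 0 (ux m * G) = ux m * mx m m 0 G + normu2 m * G"
  using C1[of m m 0 m 0 G] m0 by (simp add: mulp_rw)
lemma S18: "mx m m 0 (normx2 m * G) = normx2 m * mx m m 0 G + ux m * G + ux m * G"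
  using C1[of m m 0 0 0 G] m0 by (simp add: mulp_rw)
lemma S19: "mx m m 0 (normu2 m * G) = normu2 m * mx m m 0 G"
  using C1[of m m 0 m m G] m0 by (simp add: mulp_rw)
end
context fixes m :: nat assumes m0: "m \<noteq> 0"
begin
lemma bh_pvx: "j < m \<Longrightarrow> bihom m p q G \<Longrightarrow> bihom m (Suc p) q (pvar j * G)"
  using bihom_pvar[of j m p q G] by simp
lemma bh_pvu: "j < m \<Longrightarrow> bihom m p q G \<Longrightarrow> bihom m p (Suc q) (pvar (m + j) * G)"
  using bihom_pvar[of "m + j" m p q G] by simp
lemma bh_pdx: "j < m \<Longrightarrow> bihom m p q G \<Longrightarrow> bihom m (p - Suc 0) q (pd j G)"
  using bihom_pd[of j m p q G] by simp
lemma bh_pdu: "j < m \<Longrightarrow> bihom m p q G \<Longrightarrow> bihom m p (q - Suc 0) (pd (m + j) G)"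
  using bihom_pd[of "m + j" m p q G] by simp

lemma bh_nx: "bihom m p q G \<Longrightarrow> bihom m (p + 2) q (normx2 m * G)"
  unfolding nx_eq mulp_def V_def by (auto intro!: bihom_sum bh_pvx)
lemma bh_nu: "bihom m p q G \<Longrightarrow> bihom m p (q + 2) (normu2 m * G)"
  unfolding nu_eq mulp_def V_def by (auto intro!: bihom_sum bh_pvu)
lemma bh_ux: "bihom m p q G \<Longrightarrow> bihom m (p + 1) (q + 1) (ux m * G)"
  unfolding ux_eq mulp_def V_def
  by (auto intro!: bihom_sum bh_pvx[where p=p, simplified] bh_pvu[where p="Suc p" and q=q, simplified])
lemma bh_E: "bihom m p q G \<Longrightarrow> bihom m (p - 1) (q + 1) (mx m m 0 G)"
  unfolding mx_def V_def by (auto intro!: bihom_sum bh_pvu[where q=q, simplified] bh_pdx)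
lemma bh_F: "bihom m p q G \<Longrightarrow> bihom m (p + 1) (q - 1) (mx m 0 m G)"
  unfolding mx_def V_def by (auto intro!: bihom_sum bh_pvx[where p=p, simplified] bh_pdu)
lemma bh_D: "bihom m p q G \<Longrightarrow> bihom m (p - 1) (q - 1) (dp m m 0 G)"
  unfolding dp_def
proof (intro bihom_sum)
  fix j assume j: "j \<in> {..<m}" and G: "bihom m p q G"
  then have "bihom m (p - Suc 0) q (pd j G)" by (simp add: bh_pdx)
  then have "bihom m (p - Suc 0) (q - Suc 0) (pd (m + j) (pd j G))" using j by (simp add: bh_pdu)
  then show "bihom m (p - 1) (q - 1) (pd (m + j) (pd (0 + j) G))" by simp
qed

lemma E_van: "bihom m 0 q G \<Longrightarrow> mx m m 0 G = 0"
  unfolding mx_def by (intro sum.neutral) (auto simp: pd_vanish[of _ m 0 q G])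
lemma F_van: "bihom m p 0 G \<Longrightarrow> mx m 0 m G = 0"
  unfolding mx_def by (intro sum.neutral) (auto simp: pd_vanish[of _ m p 0 G])
lemma D_van: "bihom m p q G \<Longrightarrow> p = 0 \<or> q = 0 \<Longrightarrow> dp m m 0 G = 0"
  unfolding dp_def
proof (intro sum.neutral ballI)
  fix j assume j: "j \<in> {..<m}" and h: "bihom m p q G" "p = 0 \<or> q = 0"
  show "pd (m + j) (pd (0 + j) G) = 0"
  proof (cases "p = 0")
    case True then show ?thesis using j h by (simp add: pd_vanish[of _ m 0 q G])
  next
    case False
    then have "q = 0" using h by simp
    have "bihom m (p - 1) 0 (pd j G)" using bh_pdx[of j p q G] j h \<open>q = 0\<close> by simp
    then show ?thesis using j by (simp add: pd_vanish[of _ m "p - 1" 0])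
  qed
qed
end
abbreviation "EE m G \<equiv> mx m m 0 G"
abbreviation "FF m G \<equiv> mx m 0 m G"
abbreviation "DD m G \<equiv> dp m m 0 G"
abbreviation "LX m G \<equiv> dp m 0 0 G"
abbreviation "LU m G \<equiv> dp m m m G"

lemma lookup_numeral_mult: "lk (numeral n * (G::cpoly)) \<beta> = numeral n * lk G \<beta>"
  using lookup_K_mult[of "numeral n" G \<beta>] by simp

lemma K_mult: "K a * K b = K (a * b)" by (simp add: mult_single)
lemma K_mult_K: "K a * (K b * X) = K (a * b) * X" by (simp add: mult.assoc[symmetric] K_mult)
lemma of_nat_K: "(of_nat n :: cpoly) = K (of_nat n)" by simp

lemma comm_K: "normx2 m * (K c * X) = K c * (normx2 m * X)" "normu2 m * (K c * X) = K c * (normu2 m * X)"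
   "ux m * (K c * X) = K c * (ux m * X)"
  by (simp_all add: mult.left_commute)

lemmas lk_simps = lookup_add lookup_minus lookup_K_mult lookup_numeral_mult lookup_of_nat_mult lookup_zero lookup_uminus

lemma mx_nat: "mx m a b (of_nat n * A) = of_nat n * mx m a b A"
  using mx_K[of m a b "of_nat n" A] by simp
lemma dp_nat: "dp m a b (of_nat n * A) = of_nat n * dp m a b A"
  using dp_K[of m a b "of_nat n" A] by simp

lemma euler_xK: "bihom m p q G \<Longrightarrow> mx m 0 0 G = K (of_nat p) * G"
  using euler_x by simp
lemma euler_uK: "bihom m p q G \<Longrightarrow> mx m m m G = K (of_nat q) * G"
  using euler_u by simp

definition mu :: "nat \<Rightarrow> nat \<Rightarrow> complex" where "mu m n = of_nat m + 2 * of_nat n - 2"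

lemma mu_nz: "m > 2 \<Longrightarrow> mu m n \<noteq> 0"
proof
  assume "m > 2" "mu m n = 0"
  then have "real m + 2 * real n - 2 = 0"
    unfolding mu_def by (metis (mono_tags, lifting) of_real_0 of_real_diff of_real_add of_real_mult
        of_real_numeral of_real_of_nat_eq of_real_eq_iff)
  with \<open>m > 2\<close> show False by linarith
qed

definition Cf :: "nat \<Rightarrow> nat \<Rightarrow> nat \<Rightarrow> cpoly \<Rightarrow> cpoly" where
  "Cf m p q Y = ux m * Y - K (1 / mu m p) * (normx2 m * EE m Y) - K (1 / mu m q) * (normu2 m * FF m Y)
            + K (1 / mu m p * (1 / mu m q)) * (normx2 m * (normu2 m * DD m Y))"
definition Sf :: "nat \<Rightarrow> nat \<Rightarrow> cpoly \<Rightarrow> cpoly" where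
  "Sf m q Y = EE m Y - K (1 / mu m q) * (normu2 m * DD m Y)"

definition bet :: "nat \<Rightarrow> nat \<Rightarrow> nat \<Rightarrow> complex" where
  "bet m p i = (of_nat m + 2 * of_nat p - 4) / (of_nat m + 2 * of_nat p + 2 * of_nat i - 4)"
definition alp :: "nat \<Rightarrow> nat \<Rightarrow> nat \<Rightarrow> complex" where
  "alp m p i = (bet m p i - 1) / 2"

context fixes m :: nat assumes m4: "m > 4"
begin
lemma m0': "m \<noteq> 0" using m4 by simp
lemma mu_nz': "mu m n \<noteq> 0" using m4 mu_nz by simp

lemma harm_Cx:
  assumes Y: "bihom m p q Y" and hY: "LX m Y = 0" "LU m Y = 0"
  shows "LX m (Cf m p q Y) = 0"
proof -
  define c1 where "c1 = 1 / mu m p"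
  define c2 where "c2 = 1 / mu m q"
  note m0 = m0'
  have hc1: "c1 * (of_nat m + 2 * of_nat p - 2) = 1" using mu_nz'[of p] unfolding c1_def mu_def by simp
  have hc2: "c2 * (of_nat m + 2 * of_nat q - 2) = 1" using mu_nz'[of q] unfolding c2_def mu_def by simp
  have a1: "LX m (ux m * Y) = EE m Y + EE m Y" using S1[OF m0] hY by simp
  have a2: "LX m (normx2 m * EE m Y) = 4 * (of_nat p * EE m Y - EE m Y) + 2 * of_nat m * EE m Y"
    using S3[OF m0, of "EE m Y"] S7[OF m0, of Y] S12[OF m0, of Y] hY euler_x[OF Y] by (simp add: mx_nat)
  have a3: "LX m (normu2 m * FF m Y) = normu2 m * DD m Y + normu2 m * DD m Y"
    using S5[OF m0, of "FF m Y"] S9[OF m0, of Y] hY by (simp add: distrib_left)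
  have a4: "LX m (normx2 m * (normu2 m * DD m Y)) =
      4 * (of_nat p * (normu2 m * DD m Y) - normu2 m * DD m Y) + 2 * of_nat m * (normu2 m * DD m Y)"
    using S3[OF m0, of "normu2 m * DD m Y"] S5[OF m0, of "DD m Y"] S11[OF m0, of Y] hY
      S16[OF m0, of "DD m Y"] S14[OF m0, of Y] euler_x[OF Y]
    by (simp add: dp_nat right_diff_distrib mult.left_commute)
  show ?thesis
    unfolding Cf_def c1_def[symmetric] c2_def[symmetric] dp_add dp_diff dp_K a1 a2 a3 a4
    apply (rule poly_mapping_eqI)
    apply (simp only: lk_simps mult.assoc[of 2 "of_nat m"])
    using hc1 hc2 by algebra
qed

lemma harm_Cu:
  assumes Y: "bihom m p q Y" and hY: "LX m Y = 0" "LU m Y = 0"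
  shows "LU m (Cf m p q Y) = 0"
proof -
  define c1 where "c1 = 1 / mu m p"
  define c2 where "c2 = 1 / mu m q"
  note m0 = m0'
  have hc1: "c1 * (of_nat m + 2 * of_nat p - 2) = 1" using mu_nz'[of p] unfolding c1_def mu_def by simp
  have hc2: "c2 * (of_nat m + 2 * of_nat q - 2) = 1" using mu_nz'[of q] unfolding c2_def mu_def by simp
  have a1: "LU m (ux m * Y) = FF m Y + FF m Y" using S2[OF m0] hY by simp
  have a2: "LU m (normu2 m * FF m Y) = 4 * (of_nat q * FF m Y - FF m Y) + 2 * of_nat m * FF m Y"
    using S4[OF m0, of "FF m Y"] S10[OF m0, of Y] S13[OF m0, of Y] hY euler_u[OF Y] by (simp add: mx_nat)
  have a3: "LU m (normx2 m * EE m Y) = normx2 m * DD m Y + normx2 m * DD m Y"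
    using S6[OF m0, of "EE m Y"] S8[OF m0, of Y] hY by (simp add: distrib_left)
  have a4: "LU m (normx2 m * (normu2 m * DD m Y)) =
      normx2 m * (4 * (of_nat q * DD m Y - DD m Y) + 2 * of_nat m * DD m Y)"
    using S6[OF m0, of "normu2 m * DD m Y"] S4[OF m0, of "DD m Y"] S11[OF m0, of Y] hY
      S15[OF m0, of Y] euler_u[OF Y]
    by (simp add: dp_nat)
  show ?thesis
    unfolding Cf_def c1_def[symmetric] c2_def[symmetric] dp_add dp_diff dp_K a1 a2 a3 a4
    apply (simp only: distrib_left right_diff_distrib mult.left_commute[of "normx2 m"])
    apply (rule poly_mapping_eqI)
    apply (simp only: lk_simps mult.assoc[of 2 "of_nat m"])
    using hc1 hc2 by algebra
qed

lemma bh_nxE: "bihom m p q Y \<Longrightarrow> bihom m (p + 1) (q + 1) (normx2 m * EE m Y)"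
proof (cases p)
  case 0 assume "bihom m p q Y" then show ?thesis using 0 E_van[OF m0'] by simp
next
  case (Suc k) assume "bihom m p q Y" then show ?thesis using Suc bh_nx[OF m0' bh_E[OF m0']] by fastforce
qed
lemma bh_nuF: "bihom m p q Y \<Longrightarrow> bihom m (p + 1) (q + 1) (normu2 m * FF m Y)"
proof (cases q)
  case 0 assume "bihom m p q Y" then show ?thesis using 0 F_van[OF m0'] by simp
next
  case (Suc k) assume "bihom m p q Y" then show ?thesis using Suc bh_nu[OF m0' bh_F[OF m0']] by fastforce
qed
lemma bh_nuD: "bihom m p q Y \<Longrightarrow> bihom m (p - 1) (q + 1) (normu2 m * DD m Y)"
proof (cases q)
  case 0 assume "bihom m p q Y" then show ?thesis using 0 D_van[OF m0'] by simp
next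
  case (Suc k) assume "bihom m p q Y" then show ?thesis using Suc bh_nu[OF m0' bh_D[OF m0']] by fastforce
qed
lemma bh_nxD: "bihom m p q Y \<Longrightarrow> bihom m (p + 1) (q - 1) (normx2 m * DD m Y)"
proof (cases p)
  case 0 assume "bihom m p q Y" then show ?thesis using 0 D_van[OF m0'] by simp
next
  case (Suc k) assume "bihom m p q Y" then show ?thesis using Suc bh_nx[OF m0' bh_D[OF m0']] by fastforce
qed
lemma bh_nxnuD: "bihom m p q Y \<Longrightarrow> bihom m (p + 1) (q + 1) (normx2 m * (normu2 m * DD m Y))"
proof (cases p)
  case 0 assume "bihom m p q Y" then show ?thesis using 0 D_van[OF m0'] by simp
next
  case (Suc k) assume "bihom m p q Y" then show ?thesis using Suc bh_nx[OF m0' bh_nuD] by fastforce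
qed

lemma bh_Cf: "bihom m p q Y \<Longrightarrow> bihom m (p + 1) (q + 1) (Cf m p q Y)"
  unfolding Cf_def
  by (intro bihom_add bihom_diff bihom_K bh_ux[OF m0'] bh_nxE bh_nuF bh_nxnuD)

lemma bh_Sf: "bihom m p q Y \<Longrightarrow> bihom m (p - 1) (q + 1) (Sf m q Y)"
  unfolding Sf_def
  by (intro bihom_add bihom_diff bihom_K bh_E[OF m0'] bh_nuD)

lemma C_formula:
  assumes Y: "bihom m p q Y" and hY: "harm m Y"
  shows "C_op m Y = Cf m p q Y"
proof -
  define c1 where "c1 = 1 / mu m p"
  define c2 where "c2 = 1 / mu m q"
  note m0 = m0'
  have hY': "LX m Y = 0" "LU m Y = 0" using hY by (auto simp: harm_eq)
  have hc1: "c1 * (of_nat m + 2 * of_nat p - 2) = 1" using mu_nz'[of p] unfolding c1_def mu_def by simp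
  have hc2: "c2 * (of_nat m + 2 * of_nat q - 2) = 1" using mu_nz'[of q] unfolding c2_def mu_def by simp
  define G10 where "G10 = K c1 * (EE m Y - K c2 * (normu2 m * DD m Y))"
  define G01 where "G01 = K c2 * (FF m Y - K c1 * (normx2 m * DD m Y))"
  define G11 where "G11 = K (c1 * c2) * DD m Y"
  have DX: "LX m (DD m Y) = 0" "LU m (DD m Y) = 0" using S11[OF m0, of Y] hY' by simp_all
  have h10: "harm m G10"
  proof -
    have "LX m G10 = 0" unfolding G10_def
      using S7[OF m0, of Y] S5[OF m0, of "DD m Y"] DX hY' by (simp add: dp_K dp_diff)
    moreover have "LU m G10 = 0"
    proof -
      have a1: "LU m (EE m Y) = DD m Y + DD m Y" using S8[OF m0, of Y] hY' by simp
      have a2: "LU m (normu2 m * DD m Y) = 4 * (of_nat q * DD m Y - DD m Y) + 2 * of_nat m * DD m Y"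
        using S4[OF m0, of "DD m Y"] S15[OF m0, of Y] DX euler_u[OF Y] by (simp add: dp_nat)
      show ?thesis unfolding G10_def dp_K dp_diff a1 a2
        apply (rule poly_mapping_eqI)
        apply (simp only: lk_simps mult.assoc[of 2 "of_nat m"])
        using hc2 by algebra
    qed
    ultimately show ?thesis by (simp add: harm_eq)
  qed
  have h01: "harm m G01"
  proof -
    have "LU m G01 = 0" unfolding G01_def
      using S10[OF m0, of Y] S6[OF m0, of "DD m Y"] DX hY' by (simp add: dp_K dp_diff)
    moreover have "LX m G01 = 0"
    proof -
      have a1: "LX m (FF m Y) = DD m Y + DD m Y" using S9[OF m0, of Y] hY' by simp
      have a2: "LX m (normx2 m * DD m Y) = 4 * (of_nat p * DD m Y - DD m Y) + 2 * of_nat m * DD m Y"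
        using S3[OF m0, of "DD m Y"] S14[OF m0, of Y] DX euler_x[OF Y] by (simp add: dp_nat)
      show ?thesis unfolding G01_def dp_K dp_diff a1 a2
        apply (rule poly_mapping_eqI)
        apply (simp only: lk_simps mult.assoc[of 2 "of_nat m"])
        using hc1 by algebra
    qed
    ultimately show ?thesis by (simp add: harm_eq)
  qed
  have h11: "harm m G11" unfolding G11_def using DX by (simp add: harm_eq dp_K)
  have h0: "harm m (Cf m p q Y)" using harm_Cx[OF Y hY'] harm_Cu[OF Y hY'] by (simp add: harm_eq)
  have b10: "bihom m (p + 1 - 2) (q + 1) G10"
    unfolding G10_def by (simp, intro bihom_K bihom_diff bh_E[OF m0 Y, simplified] bh_nuD[OF Y, simplified])
  have b01: "bihom m (p + 1) (q + 1 - 2) G01"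
    unfolding G01_def by (simp, intro bihom_K bihom_diff bh_F[OF m0 Y, simplified] bh_nxD[OF Y, simplified])
  have b11: "bihom m (p + 1 - 2) (q + 1 - 2) G11"
    unfolding G11_def using bihom_K[OF bh_D[OF m0 Y]] by simp
  have z1: "p + 1 < 2 \<Longrightarrow> G10 = 0 \<and> G11 = 0"
    using E_van[OF m0, of q Y] D_van[OF m0 Y] Y by (simp add: G10_def G11_def)
  have z2: "q + 1 < 2 \<Longrightarrow> G01 = 0 \<and> G11 = 0"
    using F_van[OF m0, of p Y] D_van[OF m0 Y] Y by (simp add: G01_def G11_def)
  have Z: "ux m * Y = Cf m p q Y + mulp m 0 0 G10 + mulp m m m G01 + mulp m 0 0 (mulp m m m G11)"
    unfolding mulp_rw Cf_def G10_def G01_def G11_def c1_def[symmetric] c2_def[symmetric] K_mult[symmetric]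
    by (simp add: algebra_simps)
  show ?thesis unfolding C_op_def
    by (rule pi_s_eq[OF bh_ux[OF m0 Y] h0 h10 h01 h11 bh_Cf[OF Y] b10 b01 b11 z1 z2 Z])
qed

lemma S_formula:
  assumes Y: "bihom m p q Y" and hY: "harm m Y"
  shows "S_u m Y = Sf m q Y" and "harm m (Sf m q Y)"
proof -
  define c2 where "c2 = 1 / mu m q"
  note m0 = m0'
  have hY': "LX m Y = 0" "LU m Y = 0" using hY by (auto simp: harm_eq)
  have hc2: "c2 * (of_nat m + 2 * of_nat q - 2) = 1" using mu_nz'[of q] unfolding c2_def mu_def by simp
  have DX: "LX m (DD m Y) = 0" "LU m (DD m Y) = 0" using S11[OF m0, of Y] hY' by simp_all
  have h0: "harm m (Sf m q Y)"
  proof -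
    have "LX m (Sf m q Y) = 0" unfolding Sf_def
      using S7[OF m0, of Y] S5[OF m0, of "DD m Y"] DX hY' by (simp add: dp_K dp_diff)
    moreover have "LU m (Sf m q Y) = 0"
    proof -
      have a1: "LU m (EE m Y) = DD m Y + DD m Y" using S8[OF m0, of Y] hY' by simp
      have a2: "LU m (normu2 m * DD m Y) = 4 * (of_nat q * DD m Y - DD m Y) + 2 * of_nat m * DD m Y"
        using S4[OF m0, of "DD m Y"] S15[OF m0, of Y] DX euler_u[OF Y] by (simp add: dp_nat)
      show ?thesis unfolding Sf_def c2_def[symmetric] dp_K dp_diff a1 a2
        apply (rule poly_mapping_eqI)
        apply (simp only: lk_simps mult.assoc[of 2 "of_nat m"])
        using hc2 by algebra
    qed
    ultimately show ?thesis by (simp add: harm_eq)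
  qed
  then show "harm m (Sf m q Y)" .
  have h01: "harm m (K c2 * DD m Y)" using DX by (simp add: harm_eq dp_K)
  have b01: "bihom m (p - 1) (q + 1 - 2) (K c2 * DD m Y)"
    using bihom_K[OF bh_D[OF m0 Y]] by simp
  have z2: "q + 1 < 2 \<Longrightarrow> K c2 * DD m Y = 0 \<and> (0::cpoly) = 0"
    using D_van[OF m0 Y] by simp
  have Z: "EE m Y = Sf m q Y + mulp m 0 0 0 + mulp m m m (K c2 * DD m Y) + mulp m 0 0 (mulp m m m 0)"
    unfolding mulp_rw Sf_def c2_def[symmetric] by (simp add: algebra_simps)
  show "S_u m Y = Sf m q Y" unfolding S_u_def udx_eq
    by (rule pi_s_eq[OF bh_E[OF m0 Y] h0 harm_zero h01 harm_zero bh_Sf[OF Y] bihom_zero b01 bihom_zero _ z2 Z]) simp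
qed

lemma cnz: "(of_nat m + 2 * of_nat p + 2 * of_nat i - 4 :: complex) \<noteq> 0"
proof -
  have "(of_nat m + 2 * of_nat p + 2 * of_nat i - 4 :: complex) = of_nat (m + 2 * p + 2 * i - 4)"
    using m4 by (simp add: of_nat_diff)
  moreover have "m + 2 * p + 2 * i - 4 \<noteq> 0" using m4 by simp
  ultimately show ?thesis by (simp only: of_nat_eq_0_iff) simp
qed

lemma alp1: "alp m p 1 = - (1 / mu m p)"
proof -
  have d1: "(of_nat m + 2 * of_nat p + 2 - 4 :: complex) \<noteq> 0" using cnz[of p 1] by simp
  have "(of_nat m + 2 * of_nat p + 2 - 4 :: complex) = mu m p" by (simp add: mu_def)
  then show ?thesis using d1 mu_nz'[of p] unfolding alp_def bet_def
    by (simp add: field_simps)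
qed

lemma alp_rec: "alp m p (Suc (Suc k)) = alp m p (Suc k) - (1 / mu m (p + Suc k)) * (1 + 2 * alp m p (Suc k))"
proof -
  have d1: "(of_nat m + 2 * of_nat p + 2 * of_nat (Suc k) - 4 :: complex) \<noteq> 0" by (rule cnz)
  have d2: "(of_nat m + 2 * of_nat p + 2 * of_nat (Suc (Suc k)) - 4 :: complex) \<noteq> 0" by (rule cnz)
  have d3: "mu m (p + Suc k) \<noteq> 0" by (rule mu_nz')
  have e3: "mu m (p + Suc k) = (of_nat m + 2 * of_nat p + 2 * of_nat (Suc (Suc k)) - 4 :: complex)"
    by (simp add: mu_def algebra_simps)
  have gen: "(N/(x+2) - 1)/2 = (N/x - 1)/2 - (1/(x+2)) * (1 + 2*((N/x - 1)/2))"
    if h: "x \<noteq> 0" "x + 2 \<noteq> 0" for N x :: complex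
  proof -
    have h3: "x * x + x * 2 \<noteq> 0" using h by (metis distrib_left mult_eq_0_iff)
    have 1: "N/(x+2) = N/x - 2 * (N / (x * (x+2)))" using h h3 by (simp add: field_simps)
    have 2: "(1/(x+2)) * (1 + 2*((N/x - 1)/2)) = N / (x * (x+2))" using h h3 by (simp add: field_simps)
    have g: "\<And>a b::complex. (a - 2*b - 1)/2 = (a-1)/2 - b" by (simp add: field_simps)
    show ?thesis unfolding 1 2 by (rule g)
  qed
  have e4: "(of_nat m + 2 * of_nat p + 2 * of_nat (Suc (Suc k)) - 4 :: complex)
       = (of_nat m + 2 * of_nat p + 2 * of_nat (Suc k) - 4) + 2" by simp
  show ?thesis unfolding alp_def bet_def e3 e4 using d1 d2 e4
    by (intro gen) simp_all
qed
lemma E_pow: "\<exists>W. EE m (ux m ^ i * X) = ux m ^ i * EE m X + normu2 m * W"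
proof (induction i)
  case 0 then show ?case by (intro exI[of _ 0]) simp
next
  case (Suc i)
  then obtain W where W: "EE m (ux m ^ i * X) = ux m ^ i * EE m X + normu2 m * W" by blast
  have "EE m (ux m ^ Suc i * X) = EE m (ux m * (ux m ^ i * X))" by (simp add: mult.assoc)
  also have "\<dots> = ux m * EE m (ux m ^ i * X) + normu2 m * (ux m ^ i * X)" by (rule S17[OF m0'])
  also have "\<dots> = ux m ^ Suc i * EE m X + normu2 m * (ux m * W + ux m ^ i * X)"
    unfolding W by (simp add: algebra_simps)
  finally show ?case by blast
qed

lemma E_form:
  assumes Y: "Y = ux m ^ Suc k * X + K a * (normx2 m * (ux m ^ k * EE m X)) + normx2 m * (normx2 m * A) + normu2 m * B"
  shows "\<exists>P1 P2. EE m Y = K (1 + 2 * a) * (ux m ^ Suc k * EE m X) + normx2 m * P1 + normu2 m * P2"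
proof -
  note m0 = m0'
  obtain W1 where W1: "EE m (ux m ^ Suc k * X) = ux m ^ Suc k * EE m X + normu2 m * W1" using E_pow by blast
  obtain W2 where W2: "EE m (ux m ^ k * EE m X) = ux m ^ k * EE m (EE m X) + normu2 m * W2" using E_pow by blast
  have e2: "EE m (normx2 m * (ux m ^ k * EE m X)) = normx2 m * (ux m ^ k * EE m (EE m X) + normu2 m * W2)
       + ux m ^ Suc k * EE m X + ux m ^ Suc k * EE m X"
    unfolding S18[OF m0] W2 by (simp add: mult.assoc)
  have e3: "EE m (normx2 m * (normx2 m * A)) = normx2 m * (normx2 m * EE m A + 4 * (ux m * A))"
    unfolding S18[OF m0] by (simp add: algebra_simps)
  have "EE m Y = K (1 + 2 * a) * (ux m ^ Suc k * EE m X)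
      + normx2 m * (K a * (ux m ^ k * EE m (EE m X) + normu2 m * W2) + (normx2 m * EE m A + 4 * (ux m * A)))
      + normu2 m * (W1 + EE m B)"
    unfolding Y mx_add mx_K W1 e2 e3 S19[OF m0]
    by (simp add: algebra_simps single_add K_mult[symmetric])
  then show ?thesis by blast
qed

lemma C_props:
  assumes "bihom m p q Y" "harm m Y"
  shows "C_op m Y = Cf m p q Y" "harm m (C_op m Y)" "bihom m (p + 1) (q + 1) (C_op m Y)"
proof -
  show c: "C_op m Y = Cf m p q Y" by (rule C_formula[OF assms])
  have "LX m Y = 0" "LU m Y = 0" using assms(2) by (auto simp: harm_eq)
  then show "harm m (C_op m Y)" unfolding c harm_eq using harm_Cx[OF assms(1)] harm_Cu[OF assms(1)] by simp
  show "bihom m (p + 1) (q + 1) (C_op m Y)" unfolding c by (rule bh_Cf[OF assms(1)])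
qed

lemma Cpow_props:
  assumes "bihom m p q X" "harm m X"
  shows "harm m ((C_op m ^^ i) X) \<and> bihom m (p + i) (q + i) ((C_op m ^^ i) X)"
proof (induction i)
  case 0 then show ?case using assms by simp
next
  case (Suc i)
  then show ?case using C_props[of "p + i" "q + i" "(C_op m ^^ i) X"] by simp
qed

lemma Cpow_cong:
  assumes X: "bihom m p q X" "harm m X"
  shows "\<exists>A B. (C_op m ^^ Suc k) X = ux m ^ Suc k * X + K (alp m p (Suc k)) * (normx2 m * (ux m ^ k * EE m X))
            + normx2 m * (normx2 m * A) + normu2 m * B"
proof (induction k)
  case 0
  have "(C_op m ^^ Suc 0) X = Cf m p q X" using C_props(1)[OF X] by simp
  also have "\<dots> = ux m ^ Suc 0 * X + K (alp m p (Suc 0)) * (normx2 m * (ux m ^ 0 * EE m X))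
            + normx2 m * (normx2 m * 0) + normu2 m * (K (1 / mu m p * (1 / mu m q)) * (normx2 m * DD m X)
              - K (1 / mu m q) * FF m X)"
    unfolding Cf_def using alp1 by (simp add: algebra_simps single_uminus)
  finally show ?case by blast
next
  case (Suc k)
  then obtain A B where Y: "(C_op m ^^ Suc k) X = ux m ^ Suc k * X + K (alp m p (Suc k)) * (normx2 m * (ux m ^ k * EE m X))
            + normx2 m * (normx2 m * A) + normu2 m * B" by blast
  define Y where "Y = (C_op m ^^ Suc k) X"
  have pY: "harm m Y" "bihom m (p + Suc k) (q + Suc k) Y" using Cpow_props[OF X, of "Suc k"] by (simp_all add: Y_def)
  obtain P1 P2 where P: "EE m Y = K (1 + 2 * alp m p (Suc k)) * (ux m ^ Suc k * EE m X) + normx2 m * P1 + normu2 m * P2"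
    using E_form[OF Y[folded Y_def]] by blast
  define c1 where "c1 = 1 / mu m (p + Suc k)"
  define c2 where "c2 = 1 / mu m (q + Suc k)"
  have ka: "K (alp m p (Suc (Suc k))) = K (alp m p (Suc k)) - K c1 * K (1 + 2 * alp m p (Suc k))"
    unfolding alp_rec c1_def by (simp add: K_mult single_diff)
  have "(C_op m ^^ Suc (Suc k)) X = Cf m (p + Suc k) (q + Suc k) Y"
    using C_props(1)[OF pY(2) pY(1)] by (simp add: Y_def)
  also have "\<dots> = ux m ^ Suc (Suc k) * X + K (alp m p (Suc (Suc k))) * (normx2 m * (ux m ^ Suc k * EE m X))
            + normx2 m * (normx2 m * (ux m * A - K c1 * P1))
            + normu2 m * (ux m * B - K c1 * (normx2 m * P2) - K c2 * FF m Y + K (c1 * c2) * (normx2 m * DD m Y))"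
    unfolding Cf_def c1_def[symmetric] c2_def[symmetric] P ka
    by (subst (1) Y_def, unfold Y) (simp add: algebra_simps K_mult[symmetric])
  finally show ?case by blast
qed
lemma S_Cpow:
  assumes X: "bihom m p q X" "harm m X"
  shows "S_u m ((C_op m ^^ i) X) = K (bet m p i) * (C_op m ^^ i) (S_u m X)"
proof (cases i)
  case 0
  have "bet m p 0 = 1" using cnz[of p 0] unfolding bet_def by simp
  then show ?thesis using 0 by simp
next
  case (Suc k)
  note m0 = m0'
  define Y where "Y = (C_op m ^^ i) X"
  have pY: "harm m Y" "bihom m (p + i) (q + i) Y" using Cpow_props[OF X, of i] by (simp_all add: Y_def)
  obtain A B where YA: "Y = ux m ^ Suc k * X + K (alp m p (Suc k)) * (normx2 m * (ux m ^ k * EE m X))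
            + normx2 m * (normx2 m * A) + normu2 m * B"
    using Cpow_cong[OF X, of k] Suc by (auto simp: Y_def)
  obtain P1 P2 where P: "EE m Y = K (1 + 2 * alp m p (Suc k)) * (ux m ^ Suc k * EE m X) + normx2 m * P1 + normu2 m * P2"
    using E_form[OF YA] by blast
  have b: "1 + 2 * alp m p (Suc k) = bet m p i" unfolding alp_def Suc by (simp add: field_simps)
  define X' where "X' = S_u m X"
  have X'eq: "X' = Sf m q X" unfolding X'_def by (rule S_formula(1)[OF X])
  have pX': "bihom m (p - 1) (q + 1) X'" "harm m X'"
    unfolding X'eq using bh_Sf[OF X(1)] S_formula(2)[OF X] by auto
  define Z where "Z = (C_op m ^^ i) X'"
  have pZ: "harm m Z" using Cpow_props[OF pX', of i] by (simp add: Z_def)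
  obtain A' B' where ZA: "Z = ux m ^ Suc k * X' + K (alp m (p - 1) (Suc k)) * (normx2 m * (ux m ^ k * EE m X'))
            + normx2 m * (normx2 m * A') + normu2 m * B'"
    using Cpow_cong[OF pX', of k] Suc by (auto simp: Z_def)
  have SY: "S_u m Y = Sf m (q + i) Y" by (rule S_formula(1)[OF pY(2) pY(1)])
  have hS: "harm m (S_u m Y)" unfolding SY by (rule S_formula(2)[OF pY(2) pY(1)])
  define D where "D = S_u m Y - K (bet m p i) * Z"
  have hD: "LX m D = 0" "LU m D = 0" using hS pZ unfolding D_def by (auto simp: harm_eq dp_diff dp_K)
  have "D = mulp m 0 0 (P1 - K (bet m p i) * (K (alp m (p - 1) (Suc k)) * (ux m ^ k * EE m X')
               + normx2 m * A'))
          + mulp m m m (P2 - K (1 / mu m (q + i)) * DD m Y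
               - K (bet m p i) * (B' - ux m ^ Suc k * (K (1 / mu m q) * DD m X)))"
    unfolding D_def SY Sf_def P b ZA X'eq mulp_rw
    by (simp add: algebra_simps)
  then have "D = 0" using harm_ideal_zero[OF hD] by blast
  then show ?thesis unfolding D_def Y_def Z_def X'_def by simp
qed
end


lemma gamma_eq0:
  assumes "j \<le> k" and cnz: "(of_nat m + 2 * of_nat (k-j) + 2 * of_nat i - 4 :: complex) \<noteq> 0"
  shows "(let h = hx_eig m (int k + int i - int j - 1) in (h + of_nat i + 1) / (h + 1)) =
    (of_nat m + 2 * of_nat (k-j) - 4) / (of_nat m + 2 * of_nat (k-j) + 2 * of_nat i - 4)"
proof -
  define p where "p = k - j"
  have "of_int (int k + int i - int j - 1) = (of_nat p + of_nat i - 1 :: complex)"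
    using assms unfolding p_def by (simp add: of_nat_diff)
  then have h: "hx_eig m (int k + int i - int j - 1) = - (of_nat p + of_nat i - 1 + of_nat m / 2)"
    unfolding hx_eig_def by (simp add: algebra_simps)
  have n1: "(of_nat m + 2 * of_nat p + 2 * of_nat i - 4 :: complex) \<noteq> 0" using cnz p_def by simp
  have e1: "- (of_nat p + of_nat i - 1 + of_nat m / 2) + of_nat i + 1 = - (of_nat m + 2 * of_nat p - 4) / (2::complex)"
    by (simp add: field_simps)
  have e2: "- (of_nat p + of_nat i - 1 + of_nat m / 2) + 1 = - (of_nat m + 2 * of_nat p + 2 * of_nat i - 4) / (2::complex)"
    by (simp add: field_simps)
  have g: "\<And>N D::complex. (- N / 2) / (- D / 2) = N / D"
    by (simp add: field_simps)
  show ?thesis unfolding Let_def h e1 e2 p_def[symmetric] by (rule g)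
qed
context fixes m :: nat assumes m4: "m > 4"
begin
lemma gamma_eq:
  assumes "j \<le> k"
  shows "(let h = hx_eig m (int k + int i - int j - 1) in (h + of_nat i + 1) / (h + 1)) = bet m (k - j) i"
  unfolding bet_def by (rule gamma_eq0[OF assms cnz[OF m4]])

lemma Sj_props:
  assumes H: "bihom m k l H" "harm m H"
  shows "j \<le> k \<Longrightarrow> bihom m (k - j) (l + j) ((S_u m ^^ j) H) \<and> harm m ((S_u m ^^ j) H)"
proof (induction j)
  case 0 then show ?case using H by simp
next
  case (Suc j)
  then have IH: "bihom m (k - j) (l + j) ((S_u m ^^ j) H)" "harm m ((S_u m ^^ j) H)" by simp_all
  have eq: "(S_u m ^^ Suc j) H = Sf m (l + j) ((S_u m ^^ j) H)"
    using S_formula(1)[OF m4 IH] by simp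
  have e2: "k - j - 1 = k - Suc j" "l + j + 1 = l + Suc j" by simp_all
  show ?case unfolding eq using bh_Sf[OF m4 IH(1)] S_formula(2)[OF m4 IH] unfolding e2 by simp
qed

end

theorem proposition4p1:
  fixes m k l i j :: nat and H :: cpoly
  assumes "m > 4" and "l \<le> k" and "H \<in> Hkl m k l" and "j \<le> k - l"
  shows "C_op m (((C_op m) ^^ i) (((S_u m) ^^ j) H)) = ((C_op m) ^^ (i + 1)) (((S_u m) ^^ j) H)
    \<and> S_u m (((C_op m) ^^ i) (((S_u m) ^^ j) H))
        = (let h = hx_eig m (int k + int i - int j - 1)
           in pscale ((h + of_nat i + 1) / (h + 1)) (((C_op m) ^^ i) (((S_u m) ^^ (j + 1)) H)))"
proof
  show "C_op m (((C_op m) ^^ i) (((S_u m) ^^ j) H)) = ((C_op m) ^^ (i + 1)) (((S_u m) ^^ j) H)" by simp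
next
  have H: "bihom m k l H" "harm m H" using assms(3) by (auto simp: Hkl_def harm_def)
  have jk: "j \<le> k" using assms(2,4) by simp
  have X: "bihom m (k - j) (l + j) ((S_u m ^^ j) H)" "harm m ((S_u m ^^ j) H)"
    using Sj_props[OF assms(1) H jk] by auto
  have "S_u m (((C_op m) ^^ i) (((S_u m) ^^ j) H)) = K (bet m (k - j) i) * (C_op m ^^ i) (S_u m ((S_u m ^^ j) H))"
    by (rule S_Cpow[OF assms(1) X])
  also have "\<dots> = pscale (bet m (k - j) i) (((C_op m) ^^ i) (((S_u m) ^^ (j + 1)) H))"
    by (simp add: pscale_def mult_map_scale_conv_mult)
  finally show "S_u m (((C_op m) ^^ i) (((S_u m) ^^ j) H))
        = (let h = hx_eig m (int k + int i - int j - 1)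
           in pscale ((h + of_nat i + 1) / (h + 1)) (((C_op m) ^^ i) (((S_u m) ^^ (j + 1)) H)))"
    using gamma_eq[OF assms(1) jk, of i] by (simp add: Let_def)
qed

end
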